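(* Let $T>0$, $0<\alpha<1$, and let $c,d,\lambda>0$ be constants. Let $(p,q)$ solve \[ \begin{cases} \displaystyle p'(t)+c\,q(t)=d\int_0^t e_{\alpha,\alpha}(-\lambda(t-s)^\alpha)\,q(s)\,ds, \qquad q'(t)=p(t), \qquad t\in(0,T],\\[4pt] q(0)=u_0,\quad p(0)=u_1 . \end{cases} \] Assume $u_0=0$ and $c-d/\lambda\ge 0$. Then \[ p^2(t)+(c-d/\lambda)\,q^2(t)\le u_1^2\qquad \text{for all } t\in[0,T]. \]
   Context: The Mittag-Leffler function is $E_{\alpha,\beta}(z)=\sum_{k=0}^\infty \frac{z^k}{\Gamma(k\alpha+\beta)}$, and $e_{\alpha,\alpha}(-\lambda t^\alpha):=t^{\alpha-1}E_{\alpha,\alpha}(-\lambda t^\alpha)$ for $t>0$. *)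

theory Defs
  imports "HOL-Analysis.Analysis"
begin

definition mittag_leffler :: "real \<Rightarrow> real \<Rightarrow> real \<Rightarrow> real" where
  "mittag_leffler a b z = (\<Sum>k. z ^ k / Gamma (real k * a + b))"

text \<open>e_{a,a}(-lam t^a) := t^(a-1) E_{a,a}(-lam t^a), for t > 0.\<close>
definition ml_kernel :: "real \<Rightarrow> real \<Rightarrow> real \<Rightarrow> real" where
  "ml_kernel a lam t = t powr (a - 1) * mittag_leffler a a (- lam * t powr a)"

end

theory Submission
  imports Defs "HOL-Real_Asymp.Real_Asymp"
begin

lemma Gamma_plus1_real: "y > 0 \<Longrightarrow> Gamma (y + 1) = y * Gamma (y::real)"
  by (rule Gamma_plus1) (auto simp: nonpos_Ints_def)

lemma Gamma_shift_lower:
  fixes y a :: real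
  assumes y: "y > 0" and a: "0 < a" "a < 1"
  shows "y * Gamma y \<le> Gamma (y + a) * (y + a) powr (1 - a)"
proof -
  have cv: "convex_on {0<..} (ln \<circ> Gamma :: real \<Rightarrow> real)" by (rule log_convex_Gamma_real)
  have "(ln \<circ> Gamma) ((1 - (1-a)) *\<^sub>R (y + a) + (1-a) *\<^sub>R (y + a + 1))
        \<le> (1 - (1-a)) * (ln \<circ> Gamma) (y + a) + (1-a) * (ln \<circ> Gamma) (y + a + 1)"
    by (rule convex_onD[OF cv]) (use y a in auto)
  moreover have "(1 - (1-a)) *\<^sub>R (y + a) + (1-a) *\<^sub>R (y + a + 1) = y + 1"
    by (simp add: algebra_simps)
  ultimately have "ln (Gamma (y+1)) \<le> a * ln (Gamma (y+a)) + (1-a) * ln (Gamma (y+a+1))"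
    by simp
  also have "Gamma (y+a+1) = (y+a) * Gamma (y+a)" using y a by (intro Gamma_plus1_real) auto
  also have "ln ((y+a) * Gamma (y+a)) = ln (y+a) + ln (Gamma (y+a))"
  proof -
    have "Gamma (y+a) > 0" "y + a > 0" using y a by auto
    thus ?thesis by (simp only: ln_mult_pos)
  qed
  finally have "ln (Gamma (y+1)) \<le> ln (Gamma (y+a)) + (1-a) * ln (y+a)"
    by (simp add: algebra_simps)
  also have "\<dots> = ln (Gamma (y + a) * (y + a) powr (1 - a))"
  proof -
    have "Gamma (y+a) > 0" "y + a > 0" "(y+a) powr (1-a) > 0" using y a by auto
    thus ?thesis by (simp only: ln_mult_pos ln_powr)
  qed
  finally have "ln (Gamma (y+1)) \<le> ln (Gamma (y + a) * (y + a) powr (1 - a))" .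
  hence "Gamma (y+1) \<le> Gamma (y + a) * (y + a) powr (1 - a)"
    using y a by (subst (asm) ln_le_cancel_iff) auto
  thus ?thesis using Gamma_plus1_real[OF y] by simp
qed

lemma ml_summable_gen:
  fixes a b x :: real
  assumes a: "0 < a" "a < 1" and b: "b > 0"
  shows "summable (\<lambda>n. x ^ n / Gamma (real n * a + b))"
proof -
  have lim: "(\<lambda>n. \<bar>x\<bar> * (real n * a + b + a) powr (1 - a) / (real n * a + b)) \<longlonglongrightarrow> 0"
    using a b by real_asymp
  then have "eventually (\<lambda>n. \<bar>x\<bar> * (real n * a + b + a) powr (1 - a) / (real n * a + b) < 1/2) sequentially"
    by (rule order_tendstoD) simp
  then obtain N where N: "\<And>n. n \<ge> N \<Longrightarrow> \<bar>x\<bar> * (real n * a + b + a) powr (1 - a) / (real n * a + b) < 1/2"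
    by (auto simp: eventually_sequentially)
  show ?thesis
  proof (rule summable_ratio_test[where c = "1/2" and N = N])
  show "norm (x ^ Suc n / Gamma (real (Suc n) * a + b)) \<le> 1/2 * norm (x ^ n / Gamma (real n * a + b))"
    if "n \<ge> N" for n
  proof -
    define y where "y = real n * a + b"
    have "real n * a \<ge> 0" using a by simp
    hence y: "y > 0" using b by (simp add: y_def)
    have g1: "Gamma (real n * a + b) = Gamma y" by (simp add: y_def algebra_simps)
    have g2: "Gamma (real (Suc n) * a + b) = Gamma (y + a)" by (simp add: y_def algebra_simps)
    have Gp: "Gamma y > 0" "Gamma (y + a) > 0" using y a by auto
    have key: "y * Gamma y \<le> Gamma (y + a) * (y + a) powr (1 - a)"
      by (rule Gamma_shift_lower[OF y a])
    have "\<bar>x\<bar> * (y + a) powr (1 - a) / y < 1/2"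
      using N[OF that] by (simp add: y_def)
    hence "\<bar>x\<bar> * (y + a) powr (1 - a) * Gamma y < 1/2 * y * Gamma y"
      using y Gp by (simp add: field_simps)
    also have "1/2 * y * Gamma y \<le> 1/2 * (Gamma (y + a) * (y + a) powr (1 - a))"
      using key by simp
    finally have "\<bar>x\<bar> * Gamma y < 1/2 * Gamma (y + a)"
      using y a by (simp add: mult.commute mult.left_commute)
    hence "\<bar>x\<bar> * Gamma y \<le> 1/2 * Gamma (y + a)" by simp
    hence "\<bar>x\<bar>^n * (\<bar>x\<bar> * Gamma y) \<le> \<bar>x\<bar>^n * (1/2 * Gamma (y + a))"
      by (intro mult_left_mono) auto
    thus ?thesis using Gp unfolding g1 g2
      by (simp add: abs_mult power_abs field_simps)
  qed
  qed simp
qed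

lemma ml_summable:
  fixes a x :: real
  assumes a: "0 < a" "a < 1"
  shows "summable (\<lambda>n. x ^ n / Gamma (real n * a + a))"
  using ml_summable_gen[OF a a(1)] .

definition cv :: "(real \<Rightarrow> real) \<Rightarrow> (real \<Rightarrow> real) \<Rightarrow> real \<Rightarrow> real" where
  "cv A B t = (LINT s|lborel. indicator {0..t} s * (A (t - s) * B s))"

lemma L1_sub:
  fixes s T :: real
  assumes "integrable lborel (\<lambda>x. indicator {0..T} x * (B x :: real))" "s \<le> T"
  shows "integrable lborel (\<lambda>x. indicator {0..s} x * B x)"
proof -
  have "integrable lborel (\<lambda>x. indicator {0..s} x *\<^sub>R (indicator {0..T} x * B x))"
    by (rule integrable_mult_indicator) (use assms in auto)
  moreover have "(\<lambda>x. indicator {0..s} x *\<^sub>R (indicator {0..T} x * B x)) = (\<lambda>x. indicator {0..s} x * B x)"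
    using assms(2) by (auto simp: fun_eq_iff split: split_indicator)
  ultimately show ?thesis by simp
qed

lemma L1_reflect:
  fixes s :: real
  assumes "integrable lborel (\<lambda>x. indicator {0..s} x * (B x :: real))"
  shows "integrable lborel (\<lambda>r. indicator {0..s} r * B (s - r))"
proof -
  have "integrable lborel (\<lambda>r. indicator {0..s} (s + (-1) * r) * B (s + (-1) * r))"
    by (rule lborel_integrable_real_affine[OF assms]) simp
  moreover have "(\<lambda>r. indicator {0..s} (s + (-1) * r) * B (s + (-1) * r)) = (\<lambda>r. indicator {0..s} r * B (s - r))"
    by (auto simp: fun_eq_iff split: split_indicator)
  ultimately show ?thesis by simp
qed

lemma L1_reflect_int:
  fixes s :: real
  shows "(LINT r|lborel. indicator {0..s} r * (B (s - r) :: real)) = (LINT x|lborel. indicator {0..s} x * B x)"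
proof -
  have "(LINT x|lborel. indicator {0..s} x * B x) = \<bar>-1\<bar> *\<^sub>R (LINT r|lborel. indicator {0..s} (s + (-1) * r) * B (s + (-1) * r))"
    by (rule lborel_integral_real_affine) simp
  also have "(\<lambda>r. indicator {0..s} (s + (-1) * r) * B (s + (-1) * r)) = (\<lambda>r. indicator {0..s} r * B (s - r))"
    by (auto simp: fun_eq_iff split: split_indicator)
  finally show ?thesis by simp
qed

lemma assoc_conv:
  fixes A B f :: "real \<Rightarrow> real"
  assumes [measurable]: "A \<in> borel_measurable borel" "B \<in> borel_measurable borel" "f \<in> borel_measurable borel"
    and iA: "integrable lborel (\<lambda>x. indicator {0..T} x * A x)"
    and iB: "integrable lborel (\<lambda>x. indicator {0..T} x * B x)"
    and fb: "\<And>x. x \<in> {0..T} \<Longrightarrow> \<bar>f x\<bar> \<le> C"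
    and \<tau>: "0 \<le> \<tau>" "\<tau> \<le> T"
  shows "cv A (cv B f) \<tau> = cv (cv A B) f \<tau>"
proof -
  define F where "F = (\<lambda>s r. if 0 \<le> r \<and> r \<le> s \<and> s \<le> \<tau> then A (\<tau> - s) * (B (s - r) * f r) else 0)"
  have Fm[measurable]: "(\<lambda>(s, r). F s r) \<in> borel_measurable (lborel \<Otimes>\<^sub>M lborel)"
    unfolding F_def by measurable
  define nB where "nB = (LINT x|lborel. indicator {0..T} x * \<bar>B x\<bar>)"
  have iBa: "integrable lborel (\<lambda>x. indicator {0..T} x * \<bar>B x\<bar>)"
    using integrable_abs[OF iB] by (simp add: abs_mult)
  have iAa: "integrable lborel (\<lambda>x. indicator {0..T} x * \<bar>A x\<bar>)"
    using integrable_abs[OF iA] by (simp add: abs_mult)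
  have C0: "C \<ge> 0" using fb[of 0] \<tau> by auto
  have inner_int: "integrable lborel (\<lambda>r. F s r)" for s
  proof (cases "0 \<le> s \<and> s \<le> \<tau>")
    case True
    have "integrable lborel (\<lambda>x. indicator {0..s} x * B x)"
      by (rule L1_sub[OF iB]) (use True \<tau> in auto)
    hence i1: "integrable lborel (\<lambda>r. indicator {0..s} r * B (s - r))" by (rule L1_reflect)
    show ?thesis
    proof (rule Bochner_Integration.integrable_bound[OF integrable_mult_right[OF i1, of "\<bar>A (\<tau> - s)\<bar> * C"]])
      show "(\<lambda>r. F s r) \<in> borel_measurable lborel" unfolding F_def by measurable
      show "AE r in lborel. norm (F s r) \<le> norm (\<bar>A (\<tau> - s)\<bar> * C * (indicator {0..s} r * B (s - r)))"
      proof (rule AE_I2)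
        fix r
        show "norm (F s r) \<le> norm (\<bar>A (\<tau> - s)\<bar> * C * (indicator {0..s} r * B (s - r)))"
        proof (cases "0 \<le> r \<and> r \<le> s")
          case True2: True
          have "\<bar>f r\<bar> \<le> C" using fb True True2 \<tau> by auto
          hence "\<bar>A (\<tau> - s)\<bar> * \<bar>B (s - r)\<bar> * \<bar>f r\<bar> \<le> \<bar>A (\<tau> - s)\<bar> * \<bar>B (s - r)\<bar> * C"
            by (intro mult_left_mono) auto
          thus ?thesis using True True2 C0 by (simp add: F_def abs_mult mult_ac)
        qed (auto simp: F_def)
      qed
    qed
  next
    case False
    hence "(\<lambda>r. F s r) = (\<lambda>r. 0)" by (auto simp: F_def fun_eq_iff)
    thus ?thesis by simp
  qed
  have inner_bound: "(LINT r|lborel. norm (F s r)) \<le> indicator {0..\<tau>} s * \<bar>A (\<tau> - s)\<bar> * C * nB" for s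
  proof (cases "0 \<le> s \<and> s \<le> \<tau>")
    case True
    have iBs: "integrable lborel (\<lambda>x. indicator {0..s} x * \<bar>B x\<bar>)"
      by (rule L1_sub[OF iBa]) (use True \<tau> in auto)
    have "(LINT r|lborel. norm (F s r)) \<le> (LINT r|lborel. \<bar>A (\<tau> - s)\<bar> * C * (indicator {0..s} r * \<bar>B (s - r)\<bar>))"
    proof (rule Bochner_Integration.integral_mono)
      show "integrable lborel (\<lambda>r. norm (F s r))" using inner_int[of s] by simp
      show "integrable lborel (\<lambda>r. \<bar>A (\<tau> - s)\<bar> * C * (indicator {0..s} r * \<bar>B (s - r)\<bar>))"
        by (intro integrable_mult_right L1_reflect iBs)
      fix r
      show "norm (F s r) \<le> \<bar>A (\<tau> - s)\<bar> * C * (indicator {0..s} r * \<bar>B (s - r)\<bar>)"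
      proof (cases "0 \<le> r \<and> r \<le> s")
        case True2: True
        have "\<bar>f r\<bar> \<le> C" using fb True True2 \<tau> by auto
        hence "\<bar>A (\<tau> - s)\<bar> * \<bar>B (s - r)\<bar> * \<bar>f r\<bar> \<le> \<bar>A (\<tau> - s)\<bar> * \<bar>B (s - r)\<bar> * C"
          by (intro mult_left_mono) auto
        thus ?thesis using True True2 C0 by (simp add: F_def abs_mult mult_ac)
      qed (auto simp: F_def)
    qed
    also have "\<dots> = \<bar>A (\<tau> - s)\<bar> * C * (LINT x|lborel. indicator {0..s} x * \<bar>B x\<bar>)"
      by (simp add: L1_reflect_int[of s "\<lambda>x. \<bar>B x\<bar>"])
    also have "(LINT x|lborel. indicator {0..s} x * \<bar>B x\<bar>) \<le> nB"
      unfolding nB_def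
    proof (rule Bochner_Integration.integral_mono[OF iBs iBa])
      fix x show "indicator {0..s} x * \<bar>B x\<bar> \<le> indicator {0..T} x * \<bar>B x\<bar>"
        using True \<tau> by (auto split: split_indicator)
    qed
    hence "\<bar>A (\<tau> - s)\<bar> * C * (LINT x|lborel. indicator {0..s} x * \<bar>B x\<bar>) \<le> \<bar>A (\<tau> - s)\<bar> * C * nB"
      using C0 by (intro mult_left_mono) auto
    finally show ?thesis using True by simp
  next
    case False
    hence "(\<lambda>r. F s r) = (\<lambda>r. 0)" by (auto simp: F_def fun_eq_iff)
    thus ?thesis using False by simp
  qed
  have iAt: "integrable lborel (\<lambda>s. indicator {0..\<tau>} s * \<bar>A (\<tau> - s)\<bar>)"
    by (rule L1_reflect, rule L1_sub[OF iAa]) (use \<tau> in auto)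
  have prod_int: "integrable (lborel \<Otimes>\<^sub>M lborel) (\<lambda>(s, r). F s r)"
  proof (rule lborel_pair.Fubini_integrable)
    show "integrable lborel (\<lambda>s. LINT r|lborel. norm ((\<lambda>(s, r). F s r) (s, r)))"
    proof (rule Bochner_Integration.integrable_bound[OF integrable_mult_right[OF iAt, of "C * nB"]])
      show "(\<lambda>s. LINT r|lborel. norm ((\<lambda>(s, r). F s r) (s, r))) \<in> borel_measurable lborel"
        by measurable
      show "AE s in lborel. norm (LINT r|lborel. norm ((\<lambda>(s, r). F s r) (s, r)))
          \<le> norm (C * nB * (indicator {0..\<tau>} s * \<bar>A (\<tau> - s)\<bar>))"
      proof (rule AE_I2)
        fix s
        have "0 \<le> (LINT r|lborel. norm (F s r))" by (rule integral_nonneg_AE) auto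
        moreover have "nB \<ge> 0" unfolding nB_def by (rule integral_nonneg_AE) auto
        ultimately show "norm (LINT r|lborel. norm ((\<lambda>(s, r). F s r) (s, r)))
          \<le> norm (C * nB * (indicator {0..\<tau>} s * \<bar>A (\<tau> - s)\<bar>))"
          using inner_bound[of s] C0 by (simp add: abs_mult mult_ac)
      qed
    qed
    show "AE s in lborel. integrable lborel (\<lambda>r. (\<lambda>(s, r). F s r) (s, r))"
      using inner_int by simp
  qed (rule Fm)
  have fub: "(LINT r|lborel. LINT s|lborel. F s r) = (LINT s|lborel. LINT r|lborel. F s r)"
    by (rule lborel_pair.Fubini_integral) (use prod_int in simp)
  have lhs: "cv A (cv B f) \<tau> = (LINT s|lborel. LINT r|lborel. F s r)"
    unfolding cv_def
  proof (rule Bochner_Integration.integral_cong[OF refl])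
    fix s
    show "indicator {0..\<tau>} s * (A (\<tau> - s) * (LINT r|lborel. indicator {0..s} r * (B (s - r) * f r)))
        = (LINT r|lborel. F s r)"
    proof (cases "0 \<le> s \<and> s \<le> \<tau>")
      case True
      have "indicator {0..\<tau>} s * (A (\<tau> - s) * (LINT r|lborel. indicator {0..s} r * (B (s - r) * f r)))
          = (LINT r|lborel. A (\<tau> - s) * (indicator {0..s} r * (B (s - r) * f r)))"
        using True by simp
      also have "\<dots> = (LINT r|lborel. F s r)"
        by (rule Bochner_Integration.integral_cong) (use True in \<open>auto simp: F_def split: split_indicator\<close>)
      finally show ?thesis .
    next
      case False
      hence "(\<lambda>r. F s r) = (\<lambda>r. 0)" by (auto simp: F_def fun_eq_iff)
      thus ?thesis using False by simp
    qed
  qed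
  have rhs: "cv (cv A B) f \<tau> = (LINT r|lborel. LINT s|lborel. F s r)"
    unfolding cv_def
  proof (rule Bochner_Integration.integral_cong[OF refl])
    fix r
    show "indicator {0..\<tau>} r * ((LINT u|lborel. indicator {0..\<tau> - r} u * (A (\<tau> - r - u) * B u)) * f r)
        = (LINT s|lborel. F s r)"
    proof (cases "0 \<le> r \<and> r \<le> \<tau>")
      case True
      have "(LINT u|lborel. indicator {0..\<tau> - r} u * (A (\<tau> - r - u) * B u))
          = \<bar>1\<bar> *\<^sub>R (LINT s|lborel. indicator {0..\<tau> - r} (-r + 1 * s) * (A (\<tau> - r - (-r + 1 * s)) * B (-r + 1 * s)))"
        by (rule lborel_integral_real_affine) simp
      also have "\<dots> = (LINT s|lborel. indicator {r..\<tau>} s * (A (\<tau> - s) * B (s - r)))"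
        unfolding abs_one scaleR_one
        by (intro Bochner_Integration.integral_cong) (auto split: split_indicator)
      finally have eq: "(LINT u|lborel. indicator {0..\<tau> - r} u * (A (\<tau> - r - u) * B u))
          = (LINT s|lborel. indicator {r..\<tau>} s * (A (\<tau> - s) * B (s - r)))" .
      have "indicator {0..\<tau>} r * ((LINT u|lborel. indicator {0..\<tau> - r} u * (A (\<tau> - r - u) * B u)) * f r)
          = (LINT s|lborel. indicator {r..\<tau>} s * (A (\<tau> - s) * B (s - r)) * f r)"
        using True by (simp add: eq)
      also have "\<dots> = (LINT s|lborel. F s r)"
        by (rule Bochner_Integration.integral_cong) (use True in \<open>auto simp: F_def split: split_indicator\<close>)
      finally show ?thesis .
    next
      case False
      hence "(\<lambda>s. F s r) = (\<lambda>s. 0)" by (auto simp: F_def fun_eq_iff)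
      thus ?thesis using False by simp
    qed
  qed
  show ?thesis using lhs rhs fub by simp
qed

lemma cv_alt:
  fixes K f :: "real \<Rightarrow> real"
  shows "cv K f t = (LINT u|lborel. indicator {0..t} u * (K u * f (t - u)))"
  unfolding cv_def using L1_reflect_int[of t "\<lambda>x. K (t - x) * f x"] by simp

lemma cont_bounded_Icc:
  fixes f :: "real \<Rightarrow> real"
  assumes "continuous_on {a..b} f"
  obtains M where "M \<ge> 0" "\<And>x. x \<in> {a..b} \<Longrightarrow> \<bar>f x\<bar> \<le> M"
proof -
  have "compact (f ` {a..b})" by (rule compact_continuous_image[OF assms]) simp
  hence "bounded (f ` {a..b})" by (rule compact_imp_bounded)
  then obtain B where "\<forall>y\<in>f ` {a..b}. norm y \<le> B" by (auto simp: bounded_iff)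
  hence "\<And>x. x \<in> {a..b} \<Longrightarrow> \<bar>f x\<bar> \<le> max B 0" by force
  thus ?thesis using that[of "max B 0"] by simp
qed

lemma cont_conv:
  fixes K f :: "real \<Rightarrow> real"
  assumes [measurable]: "K \<in> borel_measurable borel"
    and iK: "integrable lborel (\<lambda>x. indicator {0..T} x * K x)"
    and cf: "continuous_on UNIV f"
  shows "continuous_on {0..T} (cv K f)"
proof (rule continuous_on_sequentiallyI)
  have fm[measurable]: "f \<in> borel_measurable borel" by (rule borel_measurable_continuous_onI[OF cf])
  obtain M where M: "M \<ge> 0" "\<And>x. x \<in> {0..T} \<Longrightarrow> \<bar>f x\<bar> \<le> M"
    using cont_bounded_Icc[OF continuous_on_subset[OF cf]] by blast
  have iKa: "integrable lborel (\<lambda>x. indicator {0..T} x * \<bar>K x\<bar>)"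
    using integrable_abs[OF iK] by (simp add: abs_mult)
  fix u :: "nat \<Rightarrow> real" and a
  assume u: "\<forall>n. u n \<in> {0..T}" and a: "a \<in> {0..T}" and lim: "u \<longlonglongrightarrow> a"
  show "(\<lambda>n. cv K f (u n)) \<longlonglongrightarrow> cv K f a"
    unfolding cv_alt
  proof (rule integral_dominated_convergence[where w = "\<lambda>x. M * (indicator {0..T} x * \<bar>K x\<bar>)"])
    show "integrable lborel (\<lambda>x. M * (indicator {0..T} x * \<bar>K x\<bar>))"
      by (intro integrable_mult_right iKa)
    show "(\<lambda>x. indicator {0..a} x * (K x * f (a - x))) \<in> borel_measurable lborel" by measurable
    show "\<And>n. (\<lambda>x. indicator {0..u n} x * (K x * f (u n - x))) \<in> borel_measurable lborel" by measurable
    show "AE x in lborel. norm (indicator {0..u n} x * (K x * f (u n - x))) \<le> M * (indicator {0..T} x * \<bar>K x\<bar>)" for n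
    proof (rule AE_I2)
      fix x
      show "norm (indicator {0..u n} x * (K x * f (u n - x))) \<le> M * (indicator {0..T} x * \<bar>K x\<bar>)"
      proof (cases "x \<in> {0..u n}")
        case True
        have "u n \<le> T" using u by auto
        hence "\<bar>f (u n - x)\<bar> \<le> M" using M(2)[of "u n - x"] True by auto
        hence "\<bar>K x\<bar> * \<bar>f (u n - x)\<bar> \<le> \<bar>K x\<bar> * M" by (intro mult_left_mono) auto
        thus ?thesis using True u[rule_format, of n] by (auto simp: abs_mult mult_ac split: split_indicator)
      qed (use M in \<open>auto split: split_indicator\<close>)
    qed
    show "AE x in lborel. (\<lambda>n. indicator {0..u n} x * (K x * f (u n - x))) \<longlonglongrightarrow> indicator {0..a} x * (K x * f (a - x))"
      using AE_lborel_singleton[of a]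
    proof (rule AE_mp, intro AE_I2 impI)
      fix x :: real assume xa: "x \<noteq> a"
      have ev: "eventually (\<lambda>n. indicator {0..u n} x = (indicator {0..a} x :: real)) sequentially"
      proof (cases "x < a")
        case True
        show ?thesis
        proof (cases "x < 0")
          case True
          thus ?thesis by (auto split: split_indicator)
        next
          case False
          have "eventually (\<lambda>n. u n > x) sequentially" by (rule order_tendstoD(1)[OF lim True])
          thus ?thesis by eventually_elim (use False True in \<open>auto split: split_indicator\<close>)
        qed
      next
        case False
        hence "a < x" using xa by auto
        have "eventually (\<lambda>n. u n < x) sequentially" by (rule order_tendstoD(2)[OF lim \<open>a < x\<close>])
        thus ?thesis by eventually_elim (use \<open>a < x\<close> in \<open>auto split: split_indicator\<close>)
      qed
      have fc: "(\<lambda>n. f (u n - x)) \<longlonglongrightarrow> f (a - x)"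
        by (rule isCont_tendsto_compose[OF _ tendsto_diff[OF lim tendsto_const]])
           (use cf in \<open>simp add: continuous_on_eq_continuous_at\<close>)
      have "(\<lambda>n. indicator {0..a} x * (K x * f (u n - x))) \<longlonglongrightarrow> indicator {0..a} x * (K x * f (a - x))"
        by (intro tendsto_mult_left fc)
      moreover have "eventually (\<lambda>n. indicator {0..a} x * (K x * f (u n - x)) = indicator {0..u n} x * (K x * f (u n - x))) sequentially"
        using ev by eventually_elim simp
      ultimately show "(\<lambda>n. indicator {0..u n} x * (K x * f (u n - x))) \<longlonglongrightarrow> indicator {0..a} x * (K x * f (a - x))"
        by (rule Lim_transform_eventually)
    qed
  qed
qed

definition gk :: "real \<Rightarrow> real \<Rightarrow> real" where
  "gk b t = (if 0 < t then t powr (b - 1) / Gamma b else 0)"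

lemma gk_meas [measurable]: "gk b \<in> borel_measurable borel"
  unfolding gk_def by measurable

lemma gk_nonneg: "b > 0 \<Longrightarrow> gk b t \<ge> 0"
  unfolding gk_def by auto

lemma gk_eq: "0 \<le> t \<Longrightarrow> gk b t = t powr (b - 1) / Gamma b"
  unfolding gk_def by auto

lemma hk_to_lborel:
  fixes f :: "real \<Rightarrow> real"
  assumes [measurable]: "f \<in> borel_measurable borel" and S[measurable]: "S \<in> sets borel"
    and I: "(f has_integral I) S" and nn: "\<And>x. x \<in> S \<Longrightarrow> 0 \<le> f x"
  shows "integrable lborel (\<lambda>x. indicator S x * f x)" "(LINT x|lborel. indicator S x * f x) = I"
proof -
  have ai: "f absolutely_integrable_on S"
    by (rule nonnegative_absolutely_integrable_1) (use I nn in auto)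
  hence "integrable lebesgue (\<lambda>x. indicator S x *\<^sub>R f x)" by (simp add: set_integrable_def)
  moreover have m: "(\<lambda>x. indicator S x *\<^sub>R f x) \<in> borel_measurable lborel" by measurable
  ultimately show "integrable lborel (\<lambda>x. indicator S x * f x)"
    using integrable_completion[OF m] by simp
  have "(f has_integral (LINT x:S|lebesgue. f x)) S" by (rule has_integral_set_lebesgue[OF ai])
  hence "(LINT x:S|lebesgue. f x) = I" using I by (rule has_integral_unique)
  moreover have "(LINT x:S|lebesgue. f x) = (LINT x|lborel. indicator S x * f x)"
    unfolding set_lebesgue_integral_def using integral_completion[OF m] by simp
  ultimately show "(LINT x|lborel. indicator S x * f x) = I" by simp
qed

lemma Gamma_plus1': "b > 0 \<Longrightarrow> Gamma (b + 1) = b * Gamma (b::real)"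
  by (rule Gamma_plus1_real)

lemma gk_int:
  assumes b: "b > 0" and x: "x \<ge> 0"
  shows "integrable lborel (\<lambda>s. indicator {0..x} s * gk b s)"
        "(LINT s|lborel. indicator {0..x} s * gk b s) = gk (b + 1) x"
proof -
  have "((\<lambda>s. s powr (b - 1)) has_integral (x powr (b - 1 + 1) / (b - 1 + 1))) {0..x}"
    by (rule has_integral_powr_from_0) (use b x in auto)
  hence "((\<lambda>s. s powr (b - 1) / Gamma b) has_integral (x powr b / b / Gamma b)) {0..x}"
    using has_integral_mult_left[of _ _ _ "1 / Gamma b"] by (simp add: divide_inverse)
  moreover have "x powr b / b / Gamma b = gk (b + 1) x"
    using b x Gamma_plus1'[OF b] by (simp add: gk_def powr_eq_0_iff)
  ultimately have "((\<lambda>s. s powr (b - 1) / Gamma b) has_integral gk (b + 1) x) {0..x}" by simp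
  hence hi: "(gk b has_integral gk (b + 1) x) {0..x}"
    by (rule has_integral_eq[rotated]) (simp add: gk_eq)
  show "integrable lborel (\<lambda>s. indicator {0..x} s * gk b s)"
       "(LINT s|lborel. indicator {0..x} s * gk b s) = gk (b + 1) x"
    by (rule hk_to_lborel[OF gk_meas _ hi], use b in \<open>auto intro: gk_nonneg\<close>)+
qed

lemma beta_hk:
  fixes a b x :: real
  assumes a: "a > 0" and b: "b > 0" and x: "x > 0"
  shows "((\<lambda>s. (x - s) powr (a - 1) * s powr (b - 1)) has_integral x powr (a + b - 1) * Beta a b) {0..x}"
proof -
  have B: "((\<lambda>u. u powr (b - 1) * (1 - u) powr (a - 1)) has_integral Beta b a) (cbox 0 1)"
    using has_integral_Beta_real[OF b a] by simp
  have "((\<lambda>s. (\<lambda>u. u powr (b - 1) * (1 - u) powr (a - 1)) ((1/x) *\<^sub>R s + 0)) has_integral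
          (Beta b a /\<^sub>R (1/x) ^ DIM(real))) (cbox ((0 - 0) /\<^sub>R (1/x)) ((1 - 0) /\<^sub>R (1/x)))"
    by (rule has_integral_affinity'[OF B]) (use x in simp)
  hence h: "((\<lambda>s. (s / x) powr (b - 1) * (1 - s / x) powr (a - 1)) has_integral (x * Beta a b)) {0..x}"
    using x by (simp add: Beta_commute divide_inverse mult.commute)
  have "((\<lambda>s. x powr (a + b - 2) * ((s / x) powr (b - 1) * (1 - s / x) powr (a - 1))) has_integral
          x powr (a + b - 2) * (x * Beta a b)) {0..x}"
    by (rule has_integral_mult_right[OF h])
  moreover have "x powr (a + b - 2) * (x * Beta a b) = x powr (a + b - 1) * Beta a b"
  proof -
    have "x powr (a + b - 1) = x powr (a + b - 2) * x powr 1" by (simp only: powr_add[symmetric]) simp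
    thus ?thesis using x by simp
  qed
  moreover have "x powr (a + b - 2) * ((s / x) powr (b - 1) * (1 - s / x) powr (a - 1)) = (x - s) powr (a - 1) * s powr (b - 1)"
    if "s \<in> {0..x}" for s
  proof -
    have s: "0 \<le> s" "s \<le> x" using that by auto
    have e1: "s powr (b - 1) = x powr (b - 1) * (s / x) powr (b - 1)"
      using x s by (subst powr_mult[symmetric]) auto
    have e2: "(x - s) powr (a - 1) = x powr (a - 1) * (1 - s / x) powr (a - 1)"
    proof -
      have "x * (1 - s / x) = x - s" using x by (simp add: field_simps)
      thus ?thesis using x s by (subst powr_mult[symmetric]) auto
    qed
    have e3: "x powr (a + b - 2) = x powr (a - 1) * x powr (b - 1)"
      using x by (simp add: powr_add[symmetric])
    show ?thesis unfolding e1 e2 e3 by (simp add: mult_ac)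
  qed
  ultimately show ?thesis
    by (metis (no_types, lifting) has_integral_eq)
qed

lemma beta_conv:
  fixes a b x :: real
  assumes a: "a > 0" and b: "b > 0" and x: "x > 0"
  shows "integrable lborel (\<lambda>s. indicator {0..x} s * (gk a (x - s) * gk b s))"
        "cv (gk a) (gk b) x = gk (a + b) x"
proof -
  have "((\<lambda>s. (x - s) powr (a - 1) * s powr (b - 1) / (Gamma a * Gamma b)) has_integral
           x powr (a + b - 1) * Beta a b / (Gamma a * Gamma b)) {0..x}"
    using has_integral_mult_left[OF beta_hk[OF a b x], of "1 / (Gamma a * Gamma b)"]
    by (simp add: divide_inverse)
  moreover have "x powr (a + b - 1) * Beta a b / (Gamma a * Gamma b) = gk (a + b) x"
    using a b x by (auto simp: Beta_def gk_def Gamma_eq_zero_iff elim!: nonpos_Ints_cases)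
  ultimately have "((\<lambda>s. (x - s) powr (a - 1) * s powr (b - 1) / (Gamma a * Gamma b)) has_integral gk (a + b) x) {0..x}"
    by simp
  hence hi: "((\<lambda>s. gk a (x - s) * gk b s) has_integral gk (a + b) x) {0..x}"
    by (rule has_integral_eq[rotated]) (simp add: gk_eq)
  have m: "(\<lambda>s. gk a (x - s) * gk b s) \<in> borel_measurable borel" by measurable
  show "integrable lborel (\<lambda>s. indicator {0..x} s * (gk a (x - s) * gk b s))"
       "cv (gk a) (gk b) x = gk (a + b) x"
    unfolding cv_def
    by (rule hk_to_lborel[OF m _ hi], use a b in \<open>auto intro!: mult_nonneg_nonneg gk_nonneg\<close>)+
qed

definition kN :: "real \<Rightarrow> real \<Rightarrow> nat \<Rightarrow> real \<Rightarrow> real" where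
  "kN a lam N t = (\<Sum>n<N. (-lam) ^ n * gk (real n * a + a) t)"

definition kz :: "real \<Rightarrow> real \<Rightarrow> real \<Rightarrow> real" where
  "kz a lam t = (if 0 < t then ml_kernel a lam t else 0)"

definition uk :: "real \<Rightarrow> real" where
  "uk t = (if 0 \<le> t then 1 else 0)"

lemma uk_meas [measurable]: "uk \<in> borel_measurable borel"
  unfolding uk_def by measurable

lemma kN_meas [measurable]: "kN a lam N \<in> borel_measurable borel"
  unfolding kN_def by measurable

lemma gk_series_term:
  assumes t: "t > 0"
  shows "gk (real n * a + a) t = t powr (a - 1) * (t powr a) ^ n / Gamma (real n * a + a)"
proof -
  have "(t powr a) ^ n = t powr (a * real n)"
    using t by (simp add: powr_realpow[symmetric] powr_powr)
  moreover have "t powr (real n * a + a - 1) = t powr (a - 1) * t powr (a * real n)"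
    by (simp add: powr_add[symmetric] algebra_simps)
  ultimately show ?thesis using t by (simp add: gk_def)
qed

lemma kN_alt:
  assumes t: "t > 0"
  shows "kN a lam N t = t powr (a - 1) * (\<Sum>n<N. (-lam * t powr a) ^ n / Gamma (real n * a + a))"
  unfolding kN_def sum_distrib_left
  by (intro sum.cong refl) (simp only: gk_series_term[OF t] power_mult_distrib, simp add: algebra_simps)

context
  fixes a lam :: real
  assumes a: "0 < a" "a < 1" and lam: "lam > 0"
begin

lemma kN_lim: "(\<lambda>N. kN a lam N t) \<longlonglongrightarrow> kz a lam t"
proof (cases "t > 0")
  case True
  have "(\<lambda>N. \<Sum>n<N. (-lam * t powr a) ^ n / Gamma (real n * a + a)) \<longlonglongrightarrow> mittag_leffler a a (-lam * t powr a)"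
    unfolding mittag_leffler_def by (rule summable_LIMSEQ[OF ml_summable[OF a]])
  hence "(\<lambda>N. t powr (a - 1) * (\<Sum>n<N. (-lam * t powr a) ^ n / Gamma (real n * a + a)))
          \<longlonglongrightarrow> t powr (a - 1) * mittag_leffler a a (-lam * t powr a)"
    by (rule tendsto_mult_left)
  thus ?thesis using True by (simp add: kN_alt kz_def ml_kernel_def)
next
  case False
  hence "kN a lam N t = 0" for N by (simp add: kN_def gk_def)
  thus ?thesis using False by (simp add: kz_def)
qed

lemma kz_meas [measurable]: "kz a lam \<in> borel_measurable borel"
  by (rule borel_measurable_LIMSEQ_real[OF kN_lim]) simp

definition Mk :: "real \<Rightarrow> real" where
  "Mk T = Gamma a * mittag_leffler a a (lam * T powr a)"

lemma kN_bound:
  assumes t: "0 < t" "t \<le> T"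
  shows "\<bar>kN a lam N t\<bar> \<le> Mk T * gk a t"
proof -
  have sm: "summable (\<lambda>n. (lam * T powr a) ^ n / Gamma (real n * a + a))" by (rule ml_summable[OF a])
  have "\<bar>\<Sum>n<N. (-lam * t powr a) ^ n / Gamma (real n * a + a)\<bar>
      \<le> (\<Sum>n<N. \<bar>(-lam * t powr a) ^ n / Gamma (real n * a + a)\<bar>)" by (rule sum_abs)
  also have "\<dots> \<le> (\<Sum>n<N. (lam * T powr a) ^ n / Gamma (real n * a + a))"
  proof (rule sum_mono)
    fix n
    have g: "Gamma (real n * a + a) > 0" using a by (intro Gamma_real_pos) (simp add: add_nonneg_pos)
    have "t powr a \<le> T powr a" using t a by (intro powr_mono2) auto
    hence "\<bar>-lam * t powr a\<bar> \<le> lam * T powr a" using lam t by (simp add: abs_mult)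
    hence "\<bar>-lam * t powr a\<bar> ^ n \<le> (lam * T powr a) ^ n" by (intro power_mono) auto
    thus "\<bar>(-lam * t powr a) ^ n / Gamma (real n * a + a)\<bar> \<le> (lam * T powr a) ^ n / Gamma (real n * a + a)"
      using g by (simp add: abs_div power_abs divide_right_mono)
  qed
  also have "\<dots> \<le> mittag_leffler a a (lam * T powr a)"
    unfolding mittag_leffler_def
  proof (rule sum_le_suminf[OF sm])
    fix n
    have g: "Gamma (real n * a + a) > 0" using a by (intro Gamma_real_pos) (simp add: add_nonneg_pos)
    show "0 \<le> (lam * T powr a) ^ n / Gamma (real n * a + a)" using g lam by simp
  qed simp
  finally have *: "\<bar>\<Sum>n<N. (-lam * t powr a) ^ n / Gamma (real n * a + a)\<bar> \<le> mittag_leffler a a (lam * T powr a)" .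
  have "\<bar>kN a lam N t\<bar> = t powr (a - 1) * \<bar>\<Sum>n<N. (-lam * t powr a) ^ n / Gamma (real n * a + a)\<bar>"
    using t by (simp add: kN_alt abs_mult)
  also have "\<dots> \<le> t powr (a - 1) * mittag_leffler a a (lam * T powr a)"
    by (intro mult_left_mono *) simp
  also have "\<dots> = Mk T * gk a t"
  proof -
    have ga: "Gamma a \<noteq> 0" using a Gamma_real_pos[of a] by linarith
    show ?thesis using t by (simp add: Mk_def gk_def ga)
  qed
  finally show ?thesis .
qed

lemma kN_bound': "0 < t \<Longrightarrow> t \<le> T \<Longrightarrow> \<bar>kN a lam N t\<bar> \<le> Mk T * gk a t"
  by (rule kN_bound)

lemma kz_bound:
  assumes t: "0 < t" "t \<le> T"
  shows "\<bar>kz a lam t\<bar> \<le> Mk T * gk a t"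
proof (rule tendsto_le[OF sequentially_bot tendsto_const])
  show "(\<lambda>N. \<bar>kN a lam N t\<bar>) \<longlonglongrightarrow> \<bar>kz a lam t\<bar>" by (intro tendsto_rabs kN_lim)
  show "eventually (\<lambda>N. \<bar>kN a lam N t\<bar> \<le> Mk T * gk a t) sequentially"
    using kN_bound[OF t] by simp
qed

lemma Mk_nonneg: "T \<ge> 0 \<Longrightarrow> Mk T \<ge> 0"
proof -
  assume T: "T \<ge> 0"
  have "kz a lam 1 = kz a lam 1" ..
  show ?thesis
    unfolding Mk_def mittag_leffler_def
    using a lam T
    by (intro mult_nonneg_nonneg suminf_nonneg ml_summable) (auto intro!: divide_nonneg_pos Gamma_real_pos add_nonneg_pos)
qed

lemma kz_zero: "t \<le> 0 \<Longrightarrow> kz a lam t = 0"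
  by (simp add: kz_def)

lemma kN_zero: "t \<le> 0 \<Longrightarrow> kN a lam N t = 0"
  by (simp add: kN_def gk_def)

lemma kz_L1:
  assumes T: "T \<ge> 0"
  shows "integrable lborel (\<lambda>x. indicator {0..T} x * kz a lam x)"
proof (rule Bochner_Integration.integrable_bound)
  show "integrable lborel (\<lambda>x. Mk T * (indicator {0..T} x * gk a x))"
    by (intro integrable_mult_right gk_int(1) a T)
  show "(\<lambda>x. indicator {0..T} x * kz a lam x) \<in> borel_measurable lborel" by measurable
  show "AE x in lborel. norm (indicator {0..T} x * kz a lam x) \<le> norm (Mk T * (indicator {0..T} x * gk a x))"
  proof (rule AE_I2)
    fix x
    show "norm (indicator {0..T} x * kz a lam x) \<le> norm (Mk T * (indicator {0..T} x * gk a x))"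
    proof (cases "0 < x \<and> x \<le> T")
      case True
      thus ?thesis using kz_bound[of x T] Mk_nonneg[OF T] gk_nonneg[of a x] a
        by (simp add: abs_mult)
    qed (auto simp: kz_def split: split_indicator)
  qed
qed

lemma uk_gk:
  assumes b: "b > 0" and x: "x > 0"
  shows "integrable lborel (\<lambda>s. indicator {0..x} s * (uk (x - s) * gk b s))"
        "cv uk (gk b) x = gk (b + 1) x"
proof -
  have eq: "(\<lambda>s. indicator {0..x} s * (uk (x - s) * gk b s)) = (\<lambda>s. indicator {0..x} s * gk b s)"
    by (auto simp: fun_eq_iff uk_def split: split_indicator)
  show "integrable lborel (\<lambda>s. indicator {0..x} s * (uk (x - s) * gk b s))"
    unfolding eq by (rule gk_int(1)) (use b x in auto)
  show "cv uk (gk b) x = gk (b + 1) x"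
    unfolding cv_def eq by (rule gk_int(2)) (use b x in auto)
qed

lemma cv_kN:
  assumes K: "\<And>n. integrable lborel (\<lambda>s. indicator {0..x} s * (K (x - s) * gk (real n * a + a) s))"
  shows "cv K (kN a lam N) x = (\<Sum>n<N. (-lam) ^ n * cv K (gk (real n * a + a)) x)"
proof -
  have "cv K (kN a lam N) x = (LINT s|lborel. (\<Sum>n<N. (-lam) ^ n * (indicator {0..x} s * (K (x - s) * gk (real n * a + a) s))))"
    unfolding cv_def kN_def
    by (intro Bochner_Integration.integral_cong refl) (simp add: sum_distrib_left mult_ac)
  also have "\<dots> = (\<Sum>n<N. (LINT s|lborel. (-lam) ^ n * (indicator {0..x} s * (K (x - s) * gk (real n * a + a) s))))"
    by (rule Bochner_Integration.integral_sum) (intro integrable_mult_right K)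
  also have "\<dots> = (\<Sum>n<N. (-lam) ^ n * cv K (gk (real n * a + a)) x)"
    unfolding cv_def by simp
  finally show ?thesis .
qed

lemma cv_kN_lim:
  assumes x: "x > 0" and K[measurable]: "K \<in> borel_measurable borel"
    and Kint: "integrable lborel (\<lambda>s. indicator {0..x} s * (\<bar>K (x - s)\<bar> * gk a s))"
  shows "(\<lambda>N. cv K (kN a lam N) x) \<longlonglongrightarrow> cv K (kz a lam) x"
  unfolding cv_def
proof (rule integral_dominated_convergence[where w = "\<lambda>s. Mk x * (indicator {0..x} s * (\<bar>K (x - s)\<bar> * gk a s))"])
  show "integrable lborel (\<lambda>s. Mk x * (indicator {0..x} s * (\<bar>K (x - s)\<bar> * gk a s)))"
    by (intro integrable_mult_right Kint)
  show "(\<lambda>s. indicator {0..x} s * (K (x - s) * kz a lam s)) \<in> borel_measurable lborel" by measurable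
  show "\<And>N. (\<lambda>s. indicator {0..x} s * (K (x - s) * kN a lam N s)) \<in> borel_measurable lborel" by measurable
  show "AE s in lborel. (\<lambda>N. indicator {0..x} s * (K (x - s) * kN a lam N s)) \<longlonglongrightarrow> indicator {0..x} s * (K (x - s) * kz a lam s)"
    by (intro AE_I2 tendsto_mult_left kN_lim)
  show "AE s in lborel. norm (indicator {0..x} s * (K (x - s) * kN a lam N s)) \<le> Mk x * (indicator {0..x} s * (\<bar>K (x - s)\<bar> * gk a s))" for N
  proof (rule AE_I2)
    fix s
    show "norm (indicator {0..x} s * (K (x - s) * kN a lam N s)) \<le> Mk x * (indicator {0..x} s * (\<bar>K (x - s)\<bar> * gk a s))"
    proof (cases "0 < s \<and> s \<le> x")
      case True
      have "\<bar>K (x - s)\<bar> * \<bar>kN a lam N s\<bar> \<le> \<bar>K (x - s)\<bar> * (Mk x * gk a s)"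
        by (intro mult_left_mono kN_bound) (use True in auto)
      thus ?thesis using True by (simp add: abs_mult mult_ac)
    next
      case False
      have "0 \<le> Mk x * (indicator {0..x} s * (\<bar>K (x - s)\<bar> * gk a s))"
        using Mk_nonneg[of x] x gk_nonneg[of a s] a by (intro mult_nonneg_nonneg) auto
      moreover have "indicator {0..x} s * (K (x - s) * kN a lam N s) = 0"
        using False by (cases "s \<le> 0") (auto simp: kN_zero split: split_indicator)
      ultimately show ?thesis by (metis norm_zero)
    qed
  qed
qed

lemma kernel_identity:
  assumes x: "x > 0"
  shows "cv (gk (1 - a)) (kz a lam) x + lam * cv uk (kz a lam) x = 1"
proof -
  define c where "c n = (-lam) ^ n * gk (real n * a + 1) x" for n
  have b1: "1 - a > 0" using a by simp
  have pos: "real n * a + a > 0" for n using a by (simp add: add_nonneg_pos)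
  have P1: "cv (gk (1 - a)) (kN a lam N) x = (\<Sum>n<N. (-lam) ^ n * gk (real n * a + 1) x)" for N
  proof -
    have "cv (gk (1 - a)) (kN a lam N) x = (\<Sum>n<N. (-lam) ^ n * cv (gk (1 - a)) (gk (real n * a + a)) x)"
      by (rule cv_kN) (rule beta_conv(1)[OF b1 pos x])
    also have "\<dots> = (\<Sum>n<N. (-lam) ^ n * gk (real n * a + 1) x)"
    proof (intro sum.cong refl)
      fix n
      have "cv (gk (1 - a)) (gk (real n * a + a)) x = gk (1 - a + (real n * a + a)) x"
        by (rule beta_conv(2)[OF b1 pos x])
      also have "1 - a + (real n * a + a) = real n * a + 1" by simp
      finally show "(-lam) ^ n * cv (gk (1 - a)) (gk (real n * a + a)) x = (-lam) ^ n * gk (real n * a + 1) x"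
        by simp
    qed
    finally show ?thesis .
  qed
  have P2: "cv uk (kN a lam N) x = (\<Sum>n<N. (-lam) ^ n * gk (real n * a + a + 1) x)" for N
  proof -
    have "cv uk (kN a lam N) x = (\<Sum>n<N. (-lam) ^ n * cv uk (gk (real n * a + a)) x)"
      by (rule cv_kN) (rule uk_gk(1)[OF pos x])
    also have "\<dots> = (\<Sum>n<N. (-lam) ^ n * gk (real n * a + a + 1) x)"
      by (intro sum.cong refl) (simp add: uk_gk(2)[OF pos x])
    finally show ?thesis .
  qed
  have P3: "cv (gk (1 - a)) (kN a lam N) x + lam * cv uk (kN a lam N) x = 1 - c N" for N
  proof -
    have "cv (gk (1 - a)) (kN a lam N) x + lam * cv uk (kN a lam N) x = (\<Sum>n<N. c n - c (Suc n))"
      unfolding P1 P2 sum_distrib_left sum.distrib[symmetric]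
      by (intro sum.cong refl) (simp add: c_def algebra_simps)
    also have "\<dots> = c 0 - c N" by (rule sum_lessThan_telescope')
    also have "c 0 = 1" using x by (simp add: c_def gk_def)
    finally show ?thesis .
  qed
  have P4: "c \<longlonglongrightarrow> 0"
  proof -
    have "(\<lambda>n. (-lam * x powr a) ^ n / Gamma (real n * a + 1)) \<longlonglongrightarrow> 0"
      by (rule summable_LIMSEQ_zero[OF ml_summable_gen[OF a]]) simp
    moreover have "c = (\<lambda>n. (-lam * x powr a) ^ n / Gamma (real n * a + 1))"
    proof (rule ext)
      fix n
      have "(x powr a) ^ n = x powr (a * real n)"
        using x by (simp add: powr_realpow[symmetric] powr_powr)
      hence e: "(-lam * x powr a) ^ n = (-lam) ^ n * x powr (real n * a)"
        by (simp only: power_mult_distrib mult.commute)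
      have "c n = (-lam) ^ n * (x powr (real n * a) / Gamma (real n * a + 1))"
        using x by (simp add: c_def gk_def)
      thus "c n = (-lam * x powr a) ^ n / Gamma (real n * a + 1)" by (simp only: e) simp
    qed
    ultimately show ?thesis by simp
  qed
  have lim1: "(\<lambda>N. cv (gk (1 - a)) (kN a lam N) x + lam * cv uk (kN a lam N) x) \<longlonglongrightarrow>
              cv (gk (1 - a)) (kz a lam) x + lam * cv uk (kz a lam) x"
  proof (intro tendsto_add tendsto_mult_left cv_kN_lim x)
    show "integrable lborel (\<lambda>s. indicator {0..x} s * (\<bar>gk (1 - a) (x - s)\<bar> * gk a s))"
      using beta_conv(1)[OF b1 a(1) x] by (simp add: abs_of_nonneg gk_nonneg[OF b1])
    show "integrable lborel (\<lambda>s. indicator {0..x} s * (\<bar>uk (x - s)\<bar> * gk a s))"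
      using uk_gk(1)[OF a(1) x] by (simp add: uk_def)
  qed simp_all
  have lim2: "(\<lambda>N. cv (gk (1 - a)) (kN a lam N) x + lam * cv uk (kN a lam N) x) \<longlonglongrightarrow> 1"
    unfolding P3 using tendsto_diff[OF tendsto_const P4, of 1] by simp
  show ?thesis using LIMSEQ_unique[OF lim1 lim2] .
qed

end

lemma fubini_swap_bound:
  fixes F G :: "real \<Rightarrow> real \<Rightarrow> real"
  assumes Fm[measurable]: "(\<lambda>(x, y). F x y) \<in> borel_measurable (lborel \<Otimes>\<^sub>M lborel)"
    and Gm[measurable]: "(\<lambda>(x, y). G x y) \<in> borel_measurable (lborel \<Otimes>\<^sub>M lborel)"
    and bnd: "\<And>x y. \<bar>F x y\<bar> \<le> G x y"
    and Gi: "AE x in lborel. integrable lborel (G x)"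
    and GGi: "integrable lborel (\<lambda>x. LINT y|lborel. G x y)"
  shows "(LINT x|lborel. LINT y|lborel. F x y) = (LINT y|lborel. LINT x|lborel. F x y)"
proof -
  have Fi: "AE x in lborel. integrable lborel (F x)"
    using Gi
  proof (rule AE_mp, intro AE_I2 impI)
    fix x assume "integrable lborel (G x)"
    thus "integrable lborel (F x)"
      by (rule Bochner_Integration.integrable_bound) (use bnd order_trans[OF _ abs_ge_self] in \<open>auto intro!: AE_I2\<close>)
  qed
  have "integrable (lborel \<Otimes>\<^sub>M lborel) (\<lambda>(x, y). F x y)"
  proof (rule lborel_pair.Fubini_integrable)
    show "integrable lborel (\<lambda>x. LINT y|lborel. norm ((\<lambda>(x, y). F x y) (x, y)))"
    proof (rule Bochner_Integration.integrable_bound[OF GGi])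
      show "(\<lambda>x. LINT y|lborel. norm ((\<lambda>(x, y). F x y) (x, y))) \<in> borel_measurable lborel" by measurable
      show "AE x in lborel. norm (LINT y|lborel. norm ((\<lambda>(x, y). F x y) (x, y))) \<le> norm (LINT y|lborel. G x y)"
        using Gi
      proof (rule AE_mp, intro AE_I2 impI)
        fix x assume gi: "integrable lborel (G x)"
        have G0: "\<And>y. G x y \<ge> 0" using bnd[of x] order_trans[OF abs_ge_zero] by blast
        have "(LINT y|lborel. \<bar>F x y\<bar>) \<le> (LINT y|lborel. G x y)"
        proof (rule Bochner_Integration.integral_mono[OF _ gi])
          show "integrable lborel (\<lambda>y. \<bar>F x y\<bar>)"
            by (rule Bochner_Integration.integrable_bound[OF gi]) (use bnd G0 in \<open>auto intro!: AE_I2\<close>)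
        qed (rule bnd)
        moreover have "0 \<le> (LINT y|lborel. \<bar>F x y\<bar>)" by (rule integral_nonneg_AE) auto
        ultimately show "norm (LINT y|lborel. norm ((\<lambda>(x, y). F x y) (x, y))) \<le> norm (LINT y|lborel. G x y)"
          by simp
      qed
    qed
    show "AE x in lborel. integrable lborel (\<lambda>y. (\<lambda>(x, y). F x y) (x, y))"
      using Fi by simp
  qed (rule Fm)
  thus ?thesis by (intro lborel_pair.Fubini_integral[symmetric]) simp
qed

lemma gamma_rep:
  fixes b y :: real
  assumes b: "0 < b" "b < 1" and y: "y > 0"
  shows "integrable lborel (\<lambda>r. indicator {0..} r * (r powr (-b) * exp (-(r * y))))"
        "(LINT r|lborel. indicator {0..} r * (r powr (-b) * exp (-(r * y)))) = Gamma (1 - b) * y powr (b - 1)"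
proof -
  have hi: "((\<lambda>u. u powr (1 - b - 1) / exp u) has_integral Gamma (1 - b)) {0..}"
    by (rule Gamma_integral_real) (use b in auto)
  have m: "(\<lambda>u. u powr (1 - b - 1) / exp u) \<in> borel_measurable borel" by measurable
  have i1: "integrable lborel (\<lambda>u. indicator {0..} u * (u powr (1 - b - 1) / exp u))"
   and v1: "(LINT u|lborel. indicator {0..} u * (u powr (1 - b - 1) / exp u)) = Gamma (1 - b)"
    by (rule hk_to_lborel[OF m _ hi]; simp)+
  define f where "f u = indicator {0..} u * (u powr (1 - b - 1) / exp u)" for u :: real
  have eq: "f (y * r) = y powr (-b) * (indicator {0..} r * (r powr (-b) * exp (-(r * y))))" for r
  proof (cases "r \<ge> 0")
    case True
    have "(y * r) powr (-b) = y powr (-b) * r powr (-b)" using True y by (simp add: powr_mult)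
    thus ?thesis using True y by (simp add: f_def exp_minus field_simps mult.commute)
  next
    case False
    thus ?thesis using y by (simp add: f_def zero_le_mult_iff)
  qed
  have i2: "integrable lborel (\<lambda>r. f (0 + y * r))"
    by (rule lborel_integrable_real_affine) (use i1 y in \<open>auto simp: f_def\<close>)
  hence "integrable lborel (\<lambda>r. y powr b * f (0 + y * r))" by (rule integrable_mult_right)
  moreover have "(\<lambda>r. y powr b * f (0 + y * r)) = (\<lambda>r. indicator {0..} r * (r powr (-b) * exp (-(r * y))))"
  proof (rule ext)
    fix r
    have yy: "y powr b * y powr (-b) = 1" using y by (simp add: powr_minus)
    show "y powr b * f (0 + y * r) = indicator {0..} r * (r powr (-b) * exp (-(r * y)))"
      unfolding add_0_left eq by (simp only: mult.assoc[symmetric] yy mult_1)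
  qed
  ultimately show "integrable lborel (\<lambda>r. indicator {0..} r * (r powr (-b) * exp (-(r * y))))" by metis
  have "Gamma (1 - b) = (LINT u|lborel. f u)" using v1 by (simp add: f_def)
  also have "\<dots> = \<bar>y\<bar> *\<^sub>R (LINT r|lborel. f (0 + y * r))"
    by (rule lborel_integral_real_affine) (use y in simp)
  also have "\<dots> = y * y powr (-b) * (LINT r|lborel. indicator {0..} r * (r powr (-b) * exp (-(r * y))))"
    using y by (simp add: eq)
  also have "y * y powr (-b) = y powr (1 - b)"
    using y by (simp add: powr_diff powr_minus divide_inverse)
  finally have "Gamma (1 - b) = y powr (1 - b) * (LINT r|lborel. indicator {0..} r * (r powr (-b) * exp (-(r * y))))" .
  thus "(LINT r|lborel. indicator {0..} r * (r powr (-b) * exp (-(r * y)))) = Gamma (1 - b) * y powr (b - 1)"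
    using y by (simp add: powr_diff powr_minus field_simps)
qed

lemma exp_kernel_pos:
  fixes v :: "real \<Rightarrow> real" and r t :: real
  assumes cv: "continuous_on UNIV v" and r: "r \<ge> 0" and t: "t \<ge> 0"
  shows "0 \<le> integral {0..t} (\<lambda>\<tau>. v \<tau> * (exp (-(r * \<tau>)) * integral {0..\<tau>} (\<lambda>s. exp (r * s) * v s)))"
proof -
  define H where "H \<tau> = integral {0..\<tau>} (\<lambda>s. exp (r * s) * v s)" for \<tau>
  define h where "h \<tau> = exp (-(r * \<tau>)) * H \<tau>" for \<tau>
  have ce: "continuous_on {0..t} (\<lambda>s. exp (r * s) * v s)"
    by (intro continuous_intros continuous_on_subset[OF cv]) auto
  have dH: "(H has_real_derivative exp (r * \<tau>) * v \<tau>) (at \<tau> within {0..t})" if "\<tau> \<in> {0..t}" for \<tau>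
    unfolding H_def has_real_derivative_iff_has_vector_derivative
    by (rule integral_has_vector_derivative[OF ce that])
  have dh: "(h has_real_derivative (v \<tau> - r * h \<tau>)) (at \<tau> within {0..t})" if "\<tau> \<in> {0..t}" for \<tau>
  proof -
    have e: "((\<lambda>\<tau>. exp (-(r * \<tau>))) has_real_derivative (-r * exp (-(r * \<tau>)))) (at \<tau> within {0..t})"
      by (auto intro!: derivative_eq_intros)
    show ?thesis
      using DERIV_mult[OF e dH[OF that]] unfolding h_def[abs_def]
      by (rule DERIV_cong) (simp add: exp_minus field_simps)
  qed
  have contH: "continuous_on {0..t} h"
    unfolding continuous_on_eq_continuous_within
  proof
    fix x assume "x \<in> {0..t}"
    from dh[OF this] show "continuous (at x within {0..t}) h"
      unfolding has_real_derivative_iff_has_vector_derivative by (rule has_vector_derivative_continuous)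
  qed
  have dq: "((\<lambda>\<tau>. h \<tau> ^ 2 / 2) has_vector_derivative (h \<tau> * (v \<tau> - r * h \<tau>))) (at \<tau> within {0..t})"
    if "\<tau> \<in> {0..t}" for \<tau>
  proof -
    have "((\<lambda>\<tau>. h \<tau> ^ 2 / 2) has_real_derivative (h \<tau> * (v \<tau> - r * h \<tau>))) (at \<tau> within {0..t})"
      using dh[OF that] by (auto intro!: derivative_eq_intros)
    thus ?thesis by (simp add: has_real_derivative_iff_has_vector_derivative)
  qed
  have i1: "((\<lambda>\<tau>. h \<tau> * (v \<tau> - r * h \<tau>)) has_integral (h t ^ 2 / 2 - h 0 ^ 2 / 2)) {0..t}"
    by (rule fundamental_theorem_of_calculus[OF t dq])
  have h0: "h 0 = 0" by (simp add: h_def H_def)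
  have ch2: "continuous_on {0..t} (\<lambda>\<tau>. r * h \<tau> ^ 2)" by (intro continuous_intros contH)
  have i2: "((\<lambda>\<tau>. r * h \<tau> ^ 2) has_integral integral {0..t} (\<lambda>\<tau>. r * h \<tau> ^ 2)) {0..t}"
    using integrable_continuous_real[OF ch2] by (rule integrable_integral)
  have n2: "integral {0..t} (\<lambda>\<tau>. r * h \<tau> ^ 2) \<ge> 0"
    by (rule integral_nonneg[OF integrable_continuous_real[OF ch2]]) (use r in auto)
  have "((\<lambda>\<tau>. h \<tau> * (v \<tau> - r * h \<tau>) + r * h \<tau> ^ 2) has_integral
          (h t ^ 2 / 2 - h 0 ^ 2 / 2 + integral {0..t} (\<lambda>\<tau>. r * h \<tau> ^ 2))) {0..t}"
    by (rule has_integral_add[OF i1 i2])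
  moreover have "(\<lambda>\<tau>. h \<tau> * (v \<tau> - r * h \<tau>) + r * h \<tau> ^ 2) = (\<lambda>\<tau>. v \<tau> * (exp (-(r * \<tau>)) * integral {0..\<tau>} (\<lambda>s. exp (r * s) * v s)))"
    by (auto simp: fun_eq_iff h_def H_def power2_eq_square algebra_simps)
  ultimately have "((\<lambda>\<tau>. v \<tau> * (exp (-(r * \<tau>)) * integral {0..\<tau>} (\<lambda>s. exp (r * s) * v s))) has_integral
          (h t ^ 2 / 2 + integral {0..t} (\<lambda>\<tau>. r * h \<tau> ^ 2))) {0..t}"
    using h0 by simp
  hence "integral {0..t} (\<lambda>\<tau>. v \<tau> * (exp (-(r * \<tau>)) * integral {0..\<tau>} (\<lambda>s. exp (r * s) * v s)))
         = h t ^ 2 / 2 + integral {0..t} (\<lambda>\<tau>. r * h \<tau> ^ 2)"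
    by (rule integral_unique)
  thus ?thesis using n2 by simp
qed

definition hL :: "(real \<Rightarrow> real) \<Rightarrow> real \<Rightarrow> real \<Rightarrow> real" where
  "hL v r \<tau> = (LINT s|lborel. indicator {0..\<tau>} s * (exp (-(r * (\<tau> - s))) * v s))"

lemma hL_hk:
  fixes v :: "real \<Rightarrow> real"
  assumes cv: "continuous_on UNIV v"
  shows "integrable lborel (\<lambda>s. indicator {0..\<tau>} s * (exp (-(r * (\<tau> - s))) * v s))"
        "hL v r \<tau> = exp (-(r * \<tau>)) * integral {0..\<tau>} (\<lambda>s. exp (r * s) * v s)"
proof -
  have c: "continuous_on {0..\<tau>} (\<lambda>s. exp (-(r * (\<tau> - s))) * v s)"
    by (intro continuous_intros continuous_on_subset[OF cv]) auto
  have si: "set_integrable lborel {0..\<tau>} (\<lambda>s. exp (-(r * (\<tau> - s))) * v s)"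
    unfolding set_integrable_def by (rule borel_integrable_compact[OF _ c]) simp
  thus "integrable lborel (\<lambda>s. indicator {0..\<tau>} s * (exp (-(r * (\<tau> - s))) * v s))"
    by (simp add: set_integrable_def)
  have "hL v r \<tau> = integral {0..\<tau>} (\<lambda>s. exp (-(r * (\<tau> - s))) * v s)"
    using set_borel_integral_eq_integral(2)[OF si] by (simp add: hL_def set_lebesgue_integral_def)
  also have "\<dots> = integral {0..\<tau>} (\<lambda>s. exp (-(r * \<tau>)) * (exp (r * s) * v s))"
    by (intro integral_cong) (simp add: exp_diff exp_minus field_simps right_diff_distrib)
  also have "\<dots> = exp (-(r * \<tau>)) * integral {0..\<tau>} (\<lambda>s. exp (r * s) * v s)"
    by (rule integral_mult_right)
  finally show "hL v r \<tau> = exp (-(r * \<tau>)) * integral {0..\<tau>} (\<lambda>s. exp (r * s) * v s)" .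
qed

lemma hL_meas [measurable]:
  fixes v :: "real \<Rightarrow> real"
  assumes [measurable]: "v \<in> borel_measurable borel"
  shows "(\<lambda>(\<tau>, r). hL v r \<tau>) \<in> borel_measurable (lborel \<Otimes>\<^sub>M lborel)"
proof -
  have [measurable]: "v \<in> borel_measurable lborel" by simp
  show ?thesis unfolding hL_def indicator_def atLeastAtMost_iff by measurable
qed

lemma hL_bound:
  fixes v :: "real \<Rightarrow> real"
  assumes cv: "continuous_on UNIV v" and V: "\<And>x. x \<in> {0..\<tau>} \<Longrightarrow> \<bar>v x\<bar> \<le> V"
    and r: "r \<ge> 0" and \<tau>: "\<tau> \<ge> 0"
  shows "\<bar>hL v r \<tau>\<bar> \<le> V * \<tau>" "r > 0 \<Longrightarrow> \<bar>hL v r \<tau>\<bar> \<le> V / r"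
proof -
  have V0: "V \<ge> 0" using V[of 0] \<tau> by auto
  have c: "continuous_on {0..\<tau>} (\<lambda>s. exp (r * s) * v s)"
    by (intro continuous_intros continuous_on_subset[OF cv]) auto
  have c2: "continuous_on {0..\<tau>} (\<lambda>s. exp (r * s) * V)"
    by (intro continuous_intros)
  have nb: "\<bar>integral {0..\<tau>} (\<lambda>s. exp (r * s) * v s)\<bar> \<le> integral {0..\<tau>} (\<lambda>s. exp (r * s) * V)"
    using integral_norm_bound_integral[OF integrable_continuous_real[OF c] integrable_continuous_real[OF c2]]
      V by (simp add: abs_mult mult_left_mono)
  have e0: "exp (-(r * \<tau>)) > 0" by simp
  have "\<bar>hL v r \<tau>\<bar> = exp (-(r * \<tau>)) * \<bar>integral {0..\<tau>} (\<lambda>s. exp (r * s) * v s)\<bar>"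
    by (simp add: hL_hk(2)[OF cv] abs_mult)
  also have "\<dots> \<le> exp (-(r * \<tau>)) * integral {0..\<tau>} (\<lambda>s. exp (r * s) * V)"
    by (rule mult_left_mono[OF nb]) simp
  finally have main: "\<bar>hL v r \<tau>\<bar> \<le> exp (-(r * \<tau>)) * integral {0..\<tau>} (\<lambda>s. exp (r * s) * V)" .
  have "integral {0..\<tau>} (\<lambda>s. exp (r * s) * V) \<le> integral {0..\<tau>} (\<lambda>s. exp (r * \<tau>) * V)"
    by (rule integral_le[OF integrable_continuous_real[OF c2]]) (use r V0 in \<open>auto intro!: mult_right_mono mult_left_mono\<close>)
  also have "\<dots> = exp (r * \<tau>) * V * \<tau>" using \<tau> by simp
  finally have "\<bar>hL v r \<tau>\<bar> \<le> exp (-(r * \<tau>)) * (exp (r * \<tau>) * V * \<tau>)"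
    using main e0 by (meson mult_left_mono order_trans less_imp_le)
  thus "\<bar>hL v r \<tau>\<bar> \<le> V * \<tau>" by (simp add: exp_minus field_simps)
  assume rp: "r > 0"
  have "((\<lambda>s. exp (r * s) * V) has_integral (exp (r * \<tau>) * V / r - exp (r * 0) * V / r)) {0..\<tau>}"
  proof (rule fundamental_theorem_of_calculus[OF \<tau>])
    fix x assume "x \<in> {0..\<tau>}"
    show "((\<lambda>s. exp (r * s) * V / r) has_vector_derivative exp (r * x) * V) (at x within {0..\<tau>})"
      unfolding has_real_derivative_iff_has_vector_derivative[symmetric]
      using rp by (auto intro!: derivative_eq_intros)
  qed
  hence "integral {0..\<tau>} (\<lambda>s. exp (r * s) * V) = exp (r * \<tau>) * V / r - V / r"
    by (intro integral_unique) simp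
  hence "\<bar>hL v r \<tau>\<bar> \<le> exp (-(r * \<tau>)) * (exp (r * \<tau>) * V / r - V / r)" using main by simp
  also have "\<dots> = V / r - exp (-(r * \<tau>)) * V / r" by (simp add: exp_minus field_simps)
  also have "\<dots> \<le> V / r" using V0 rp by simp
  finally show "\<bar>hL v r \<tau>\<bar> \<le> V / r" .
qed

lemma const_int: "integrable lborel (\<lambda>x::real. indicator {a..b} x * (C::real))"
  using borel_integrable_compact[of "{a..b}" "\<lambda>_. C"] by simp

lemma Q_nonneg:
  fixes v :: "real \<Rightarrow> real"
  assumes cv: "continuous_on UNIV v" and V: "\<And>x. x \<in> {0..t} \<Longrightarrow> \<bar>v x\<bar> \<le> V"
    and r: "r \<ge> 0" and t: "t \<ge> 0"
  shows "0 \<le> (LINT \<tau>|lborel. indicator {0..t} \<tau> * (v \<tau> * hL v r \<tau>))"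
proof -
  have vm[measurable]: "v \<in> borel_measurable borel" by (rule borel_measurable_continuous_onI[OF cv])
  have V0: "V \<ge> 0" using V[of 0] t by auto
  have hm: "(\<lambda>\<tau>. hL v r \<tau>) \<in> borel_measurable lborel"
  proof -
    have [measurable]: "v \<in> borel_measurable lborel" by simp
    show ?thesis unfolding hL_def indicator_def atLeastAtMost_iff by measurable
  qed
  have si: "set_integrable lborel {0..t} (\<lambda>\<tau>. v \<tau> * hL v r \<tau>)"
    unfolding set_integrable_def
  proof (rule Bochner_Integration.integrable_bound[OF const_int[of 0 t "V * (V * t)"]])
    show "(\<lambda>x. indicator {0..t} x *\<^sub>R (v x * hL v r x)) \<in> borel_measurable lborel"
      using hm by measurable
    show "AE x in lborel. norm (indicator {0..t} x *\<^sub>R (v x * hL v r x)) \<le> norm (indicator {0..t} x * (V * (V * t)))"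
    proof (rule AE_I2)
      fix x
      show "norm (indicator {0..t} x *\<^sub>R (v x * hL v r x)) \<le> norm (indicator {0..t} x * (V * (V * t)))"
      proof (cases "x \<in> {0..t}")
        case True
        have h1: "\<bar>hL v r x\<bar> \<le> V * x"
          by (rule hL_bound(1)[OF cv _ r]) (use V True in auto)
        also have "V * x \<le> V * t" using True V0 by (intro mult_left_mono) auto
        finally have "\<bar>v x\<bar> * \<bar>hL v r x\<bar> \<le> V * (V * t)"
          using V[OF True] by (intro mult_mono) auto
        thus ?thesis using True V0 t by (simp add: abs_mult)
      qed simp
    qed
  qed
  have "(LINT \<tau>|lborel. indicator {0..t} \<tau> * (v \<tau> * hL v r \<tau>)) = integral {0..t} (\<lambda>\<tau>. v \<tau> * hL v r \<tau>)"
    using set_borel_integral_eq_integral(2)[OF si] by (simp add: set_lebesgue_integral_def)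
  also have "\<dots> = integral {0..t} (\<lambda>\<tau>. v \<tau> * (exp (-(r * \<tau>)) * integral {0..\<tau>} (\<lambda>s. exp (r * s) * v s)))"
    by (intro integral_cong) (simp add: hL_hk(2)[OF cv])
  finally show ?thesis using exp_kernel_pos[OF cv r t] by simp
qed

lemma inner_rep:
  fixes v :: "real \<Rightarrow> real"
  assumes b: "0 < b" "b < 1" and cv: "continuous_on UNIV v"
    and V: "\<And>x. x \<in> {0..\<tau>} \<Longrightarrow> \<bar>v x\<bar> \<le> V" and \<tau>: "\<tau> \<ge> 0"
  shows "cv (gk b) v \<tau> = 1 / (Gamma b * Gamma (1 - b)) * (LINT r|lborel. indicator {0..} r * (r powr (-b) * hL v r \<tau>))"
proof -
  have vm[measurable]: "v \<in> borel_measurable borel" by (rule borel_measurable_continuous_onI[OF cv])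
  have V0: "V \<ge> 0" using V[of 0] \<tau> by auto
  define E where "E s r = indicator {0..} r * (r powr (-b) * exp (-(r * (\<tau> - s))))" for s r :: real
  have E0: "E s r \<ge> 0" for s r by (simp add: E_def)
  define F where "F s r = indicator {0..\<tau>} s * E s r * v s" for s r
  define G where "G s r = V * (indicator {0..\<tau>} s * E s r)" for s r
  have Em[measurable]: "(\<lambda>(s, r). E s r) \<in> borel_measurable (lborel \<Otimes>\<^sub>M lborel)"
    unfolding E_def by measurable
  have Fm[measurable]: "(\<lambda>(s, r). F s r) \<in> borel_measurable (lborel \<Otimes>\<^sub>M lborel)"
    unfolding F_def by measurable
  have Gm[measurable]: "(\<lambda>(s, r). G s r) \<in> borel_measurable (lborel \<Otimes>\<^sub>M lborel)"
    unfolding G_def by measurable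
  have gb: "Gamma b > 0" "Gamma (1 - b) > 0" using b by auto
  have Erep: "integrable lborel (E s)" "(LINT r|lborel. E s r) = Gamma (1 - b) * (\<tau> - s) powr (b - 1)"
    if "s < \<tau>" for s
    using gamma_rep[OF b, of "\<tau> - s"] that by (simp_all add: E_def[abs_def])
  have bnd: "\<bar>F s r\<bar> \<le> G s r" for s r
  proof (cases "s \<in> {0..\<tau>}")
    case True
    have "\<bar>v s\<bar> * E s r \<le> V * E s r" using V[OF True] E0 by (intro mult_right_mono) auto
    thus ?thesis using True E0 by (simp add: F_def G_def abs_mult mult_ac)
  qed (simp add: F_def G_def)
  have AEs: "AE s in lborel. s \<noteq> \<tau>" by (rule AE_lborel_singleton)
  have Gi: "AE s in lborel. integrable lborel (G s)"
    using AEs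
  proof (rule AE_mp, intro AE_I2 impI)
    fix s assume "s \<noteq> \<tau>"
    show "integrable lborel (G s)"
    proof (cases "s \<in> {0..\<tau>}")
      case True
      hence "s < \<tau>" using \<open>s \<noteq> \<tau>\<close> by auto
      show ?thesis unfolding G_def[abs_def] by (intro integrable_mult_right Erep(1)[OF \<open>s < \<tau>\<close>])
    next
      case False
      hence "G s = (\<lambda>r. 0)" by (simp add: G_def[abs_def])
      thus ?thesis by simp
    qed
  qed
  have GGeq: "AE s in lborel. (LINT r|lborel. G s r) = V * Gamma (1 - b) * Gamma b * (indicator {0..\<tau>} s * gk b (\<tau> - s))"
    using AEs
  proof (rule AE_mp, intro AE_I2 impI)
    fix s assume "s \<noteq> \<tau>"
    show "(LINT r|lborel. G s r) = V * Gamma (1 - b) * Gamma b * (indicator {0..\<tau>} s * gk b (\<tau> - s))"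
    proof (cases "s \<in> {0..\<tau>}")
      case True
      hence st: "s < \<tau>" using \<open>s \<noteq> \<tau>\<close> by auto
      have "(LINT r|lborel. G s r) = V * (LINT r|lborel. E s r)" using True by (simp add: G_def)
      also have "\<dots> = V * Gamma (1 - b) * Gamma b * (indicator {0..\<tau>} s * gk b (\<tau> - s))"
        using True st gb by (simp add: Erep(2)[OF st] gk_def)
      finally show ?thesis .
    qed (simp add: G_def)
  qed
  have GGi: "integrable lborel (\<lambda>s. LINT r|lborel. G s r)"
  proof -
    have "integrable lborel (\<lambda>s. indicator {0..\<tau>} s * gk b (\<tau> - s))"
      by (rule L1_reflect, rule gk_int(1)[OF b(1) \<tau>])
    hence "integrable lborel (\<lambda>s. V * Gamma (1 - b) * Gamma b * (indicator {0..\<tau>} s * gk b (\<tau> - s)))"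
      by (rule integrable_mult_right)
    moreover have "(\<lambda>s. LINT r|lborel. G s r) \<in> borel_measurable lborel" by measurable
    ultimately show ?thesis
      using integrable_cong_AE[OF _ _ GGeq] by (metis (no_types, lifting) borel_measurable_integrable)
  qed
  have swap: "(LINT s|lborel. LINT r|lborel. F s r) = (LINT r|lborel. LINT s|lborel. F s r)"
    by (rule fubini_swap_bound[OF Fm Gm bnd Gi GGi])
  let ?cc = "1 / (Gamma b * Gamma (1 - b))"
  have "cv (gk b) v \<tau> = (LINT s|lborel. ?cc * (LINT r|lborel. F s r))"
    unfolding cv_def
  proof (rule integral_cong_AE)
    show "AE s in lborel. indicator {0..\<tau>} s * (gk b (\<tau> - s) * v s) = ?cc * (LINT r|lborel. F s r)"
      using AEs
    proof (rule AE_mp, intro AE_I2 impI)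
      fix s assume "s \<noteq> \<tau>"
      show "indicator {0..\<tau>} s * (gk b (\<tau> - s) * v s) = ?cc * (LINT r|lborel. F s r)"
      proof (cases "s \<in> {0..\<tau>}")
        case True
        hence st: "s < \<tau>" using \<open>s \<noteq> \<tau>\<close> by auto
        have "(LINT r|lborel. F s r) = v s * (LINT r|lborel. E s r)"
          using True by (simp add: F_def mult_ac)
        thus ?thesis using True st gb by (simp add: Erep(2)[OF st] gk_def)
      qed (simp add: F_def)
    qed
  qed measurable
  also have "\<dots> = ?cc * (LINT s|lborel. LINT r|lborel. F s r)" by simp
  also have "\<dots> = ?cc * (LINT r|lborel. LINT s|lborel. F s r)" by (simp only: swap)
  also have "(LINT r|lborel. LINT s|lborel. F s r) = (LINT r|lborel. indicator {0..} r * (r powr (-b) * hL v r \<tau>))"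
  proof (rule Bochner_Integration.integral_cong[OF refl])
    fix r
    have "(LINT s|lborel. F s r) = (LINT s|lborel. (indicator {0..} r * r powr (-b)) * (indicator {0..\<tau>} s * (exp (-(r * (\<tau> - s))) * v s)))"
      by (intro Bochner_Integration.integral_cong refl) (simp add: F_def E_def mult_ac)
    also have "\<dots> = indicator {0..} r * (r powr (-b) * hL v r \<tau>)"
      by (simp add: hL_def)
    finally show "(LINT s|lborel. F s r) = indicator {0..} r * (r powr (-b) * hL v r \<tau>)" .
  qed
  finally show ?thesis .
qed

lemma W_int:
  fixes b t :: real
  assumes b: "0 < b" "b < 1" and t: "t \<ge> 0"
  shows "integrable lborel (\<lambda>r. indicator {0..1} r * (t * r powr (-b)) + indicator {1..} r * r powr (-b - 1))"
proof (rule Bochner_Integration.integrable_add)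
  have "((\<lambda>r. r powr (-b)) has_integral (1 powr (-b + 1) / (-b + 1))) {0..1}"
    by (rule has_integral_powr_from_0) (use b in auto)
  moreover have m1: "(\<lambda>r. r powr (-b)) \<in> borel_measurable borel" by measurable
  ultimately have "integrable lborel (\<lambda>r. indicator {0..1} r * r powr (-b))"
    by (intro hk_to_lborel(1)) auto
  hence "integrable lborel (\<lambda>r. t * (indicator {0..1} r * r powr (-b)))" by (rule integrable_mult_right)
  thus "integrable lborel (\<lambda>r. indicator {0..1} r * (t * r powr (-b)))" by (simp add: mult_ac)
  have "((\<lambda>r. r powr (-b - 1)) has_integral -(1 powr (-b - 1 + 1)) / (-b - 1 + 1)) {1..}"
    by (rule has_integral_powr_to_inf) (use b in auto)
  moreover have m2: "(\<lambda>r. r powr (-b - 1)) \<in> borel_measurable borel" by measurable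
  ultimately show "integrable lborel (\<lambda>r. indicator {1..} r * r powr (-b - 1))"
    by (intro hk_to_lborel(1)) auto
qed

theorem pos_kernel:
  fixes v :: "real \<Rightarrow> real" and b t :: real
  assumes b: "0 < b" "b < 1" and cv: "continuous_on UNIV v" and t: "t \<ge> 0"
  shows "0 \<le> (LINT \<tau>|lborel. indicator {0..t} \<tau> * (v \<tau> * cv (gk b) v \<tau>))"
proof -
  have vm[measurable]: "v \<in> borel_measurable borel" by (rule borel_measurable_continuous_onI[OF cv])
  obtain V where V0: "V \<ge> 0" and V: "\<And>x. x \<in> {0..t} \<Longrightarrow> \<bar>v x\<bar> \<le> V"
    using cont_bounded_Icc[OF continuous_on_subset[OF cv]] by blast
  let ?cc = "1 / (Gamma b * Gamma (1 - b))"
  have cc0: "?cc \<ge> 0" using b by simp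
  define W where "W r = indicator {0..1} r * (t * r powr (-b)) + indicator {1..} r * r powr (-b - 1)" for r :: real
  have W0: "W r \<ge> 0" for r using t by (simp add: W_def)
  have Wi: "integrable lborel W" unfolding W_def[abs_def] by (rule W_int[OF b t])
  define F2 where "F2 \<tau> r = indicator {0..t} \<tau> * v \<tau> * (indicator {0..} r * (r powr (-b) * hL v r \<tau>))" for \<tau> r
  define G2 where "G2 \<tau> r = V * V * (indicator {0..t} \<tau> * W r)" for \<tau> r
  have F2m[measurable]: "(\<lambda>(\<tau>, r). F2 \<tau> r) \<in> borel_measurable (lborel \<Otimes>\<^sub>M lborel)"
    unfolding F2_def by measurable
  have G2m[measurable]: "(\<lambda>(\<tau>, r). G2 \<tau> r) \<in> borel_measurable (lborel \<Otimes>\<^sub>M lborel)"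
  proof -
    have [measurable]: "W \<in> borel_measurable borel" unfolding W_def[abs_def] by measurable
    show ?thesis unfolding G2_def by measurable
  qed
  have bnd: "\<bar>F2 \<tau> r\<bar> \<le> G2 \<tau> r" for \<tau> r
  proof (cases "\<tau> \<in> {0..t} \<and> r \<ge> 0")
    case True
    hence \<tau>t: "\<tau> \<in> {0..t}" and r: "r \<ge> 0" by auto
    have Vt: "\<And>x. x \<in> {0..\<tau>} \<Longrightarrow> \<bar>v x\<bar> \<le> V" using V \<tau>t by auto
    have hb: "r powr (-b) * \<bar>hL v r \<tau>\<bar> \<le> V * W r"
    proof (cases "r \<le> 1")
      case True
      have "\<bar>hL v r \<tau>\<bar> \<le> V * \<tau>" by (rule hL_bound(1)[OF cv Vt r]) (use \<tau>t in auto)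
      also have "\<dots> \<le> V * t" using \<tau>t V0 by (intro mult_left_mono) auto
      finally have "r powr (-b) * \<bar>hL v r \<tau>\<bar> \<le> r powr (-b) * (V * t)" by (intro mult_left_mono) auto
      also have "\<dots> = V * (indicator {0..1} r * (t * r powr (-b)))" using True r by simp
      also have "\<dots> \<le> V * W r" unfolding W_def using V0 by (intro mult_left_mono) auto
      finally show ?thesis .
    next
      case False
      hence rp: "r > 0" by simp
      have "\<bar>hL v r \<tau>\<bar> \<le> V / r" by (rule hL_bound(2)[OF cv Vt r _ rp]) (use \<tau>t in auto)
      hence "r powr (-b) * \<bar>hL v r \<tau>\<bar> \<le> r powr (-b) * (V / r)" by (intro mult_left_mono) auto
      also have "\<dots> = V * r powr (-b - 1)" using rp by (simp add: powr_diff field_simps)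
      also have "\<dots> = V * (indicator {1..} r * r powr (-b - 1))" using False by simp
      also have "\<dots> \<le> V * W r" unfolding W_def using V0 t False by (intro mult_left_mono) auto
      finally show ?thesis .
    qed
    have "\<bar>v \<tau>\<bar> * (r powr (-b) * \<bar>hL v r \<tau>\<bar>) \<le> V * (V * W r)"
      using V[OF \<tau>t] hb V0 by (rule mult_mono) auto
    thus ?thesis using \<tau>t r by (simp add: F2_def G2_def abs_mult mult_ac)
  next
    case False
    have "0 \<le> G2 \<tau> r" unfolding G2_def using V0 W0 by simp
    moreover have "F2 \<tau> r = 0" using False by (auto simp: F2_def)
    ultimately show ?thesis by simp
  qed
  have Gi: "AE \<tau> in lborel. integrable lborel (G2 \<tau>)"
    unfolding G2_def[abs_def] by (intro AE_I2 integrable_mult_right Wi)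
  have GGi: "integrable lborel (\<lambda>\<tau>. LINT r|lborel. G2 \<tau> r)"
  proof -
    have "(\<lambda>\<tau>. LINT r|lborel. G2 \<tau> r) = (\<lambda>\<tau>. indicator {0..t} \<tau> * (V * V * (LINT r|lborel. W r)))"
      by (simp add: G2_def fun_eq_iff mult_ac)
    thus ?thesis using const_int by simp
  qed
  have swap: "(LINT \<tau>|lborel. LINT r|lborel. F2 \<tau> r) = (LINT r|lborel. LINT \<tau>|lborel. F2 \<tau> r)"
    by (rule fubini_swap_bound[OF F2m G2m bnd Gi GGi])
  have "(LINT \<tau>|lborel. indicator {0..t} \<tau> * (v \<tau> * cv (gk b) v \<tau>))
      = (LINT \<tau>|lborel. ?cc * (LINT r|lborel. F2 \<tau> r))"
  proof (rule Bochner_Integration.integral_cong[OF refl])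
    fix \<tau>
    show "indicator {0..t} \<tau> * (v \<tau> * cv (gk b) v \<tau>) = ?cc * (LINT r|lborel. F2 \<tau> r)"
    proof (cases "\<tau> \<in> {0..t}")
      case True
      have "cv (gk b) v \<tau> = ?cc * (LINT r|lborel. indicator {0..} r * (r powr (-b) * hL v r \<tau>))"
        by (rule inner_rep[OF b cv, of _ V]) (use V True in auto)
      thus ?thesis using True by (simp add: F2_def)
    qed (simp add: F2_def)
  qed
  also have "\<dots> = ?cc * (LINT r|lborel. LINT \<tau>|lborel. F2 \<tau> r)" by (simp add: swap)
  also have "(LINT r|lborel. LINT \<tau>|lborel. F2 \<tau> r)
      = (LINT r|lborel. indicator {0..} r * r powr (-b) * (LINT \<tau>|lborel. indicator {0..t} \<tau> * (v \<tau> * hL v r \<tau>)))"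
  proof (intro Bochner_Integration.integral_cong refl)
    fix r
    have "(\<lambda>\<tau>. F2 \<tau> r) = (\<lambda>\<tau>. (indicator {0..} r * r powr (-b)) * (indicator {0..t} \<tau> * (v \<tau> * hL v r \<tau>)))"
      by (simp add: F2_def fun_eq_iff mult_ac)
    thus "(LINT \<tau>|lborel. F2 \<tau> r) = indicator {0..} r * r powr (-b) * (LINT \<tau>|lborel. indicator {0..t} \<tau> * (v \<tau> * hL v r \<tau>))"
      by (simp only: integral_mult_right_zero)
  qed
  also have "\<dots> \<ge> 0"
  proof (rule integral_nonneg_AE, rule AE_I2)
    fix r
    show "0 \<le> indicator {0..} r * r powr (-b) * (LINT \<tau>|lborel. indicator {0..t} \<tau> * (v \<tau> * hL v r \<tau>))"
    proof (cases "r \<ge> 0")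
      case True
      thus ?thesis using Q_nonneg[OF cv V True t] by simp
    qed simp
  qed
  ultimately show ?thesis using cc0 by simp
qed

lemma cv_cong_fun:
  assumes "\<And>s. s \<in> {0..\<tau>} \<Longrightarrow> f s = g s"
  shows "cv A f \<tau> = cv A g \<tau>"
  unfolding cv_def by (intro Bochner_Integration.integral_cong refl) (use assms in \<open>auto split: split_indicator\<close>)

lemma cv_cong_ker:
  assumes "\<And>x. 0 < x \<Longrightarrow> x \<le> \<tau> \<Longrightarrow> A x = B x"
  shows "cv A f \<tau> = cv B f \<tau>"
  unfolding cv_def
proof (rule integral_discrete_difference[where X = "{\<tau>}"])
  fix s assume "s \<notin> {\<tau>}"
  thus "indicator {0..\<tau>} s * (A (\<tau> - s) * f s) = indicator {0..\<tau>} s * (B (\<tau> - s) * f s)"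
    using assms[of "\<tau> - s"] by (auto split: split_indicator)
qed auto

lemma cv_zero: "cv A f 0 = 0"
  unfolding cv_def
proof (rule integral_eq_zero_AE)
  show "AE s in lborel. indicator {0..0} s * (A (0 - s) * f s) = 0"
    using AE_lborel_singleton[of 0] by eventually_elim (auto split: split_indicator)
qed

lemma cv_uk: "cv uk f \<tau> = (LINT s|lborel. indicator {0..\<tau>} s * f s)"
  unfolding cv_def by (intro Bochner_Integration.integral_cong refl) (auto simp: uk_def split: split_indicator)

lemma cv_uk_hk:
  fixes f :: "real \<Rightarrow> real"
  assumes "continuous_on {0..\<tau>} f"
  shows "cv uk f \<tau> = integral {0..\<tau>} f"
proof -
  have si: "set_integrable lborel {0..\<tau>} f"
    unfolding set_integrable_def by (rule borel_integrable_compact[OF _ assms]) simp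
  show ?thesis unfolding cv_uk using set_borel_integral_eq_integral(2)[OF si]
    by (simp add: set_lebesgue_integral_def)
qed

lemma cv_K_uk: "cv K uk x = cv uk K x"
  unfolding cv_alt[of K uk] cv_uk
  by (intro Bochner_Integration.integral_cong refl) (auto simp: uk_def split: split_indicator)

lemma cv_meas [measurable]:
  assumes [measurable]: "A \<in> borel_measurable borel" "B \<in> borel_measurable borel"
  shows "cv A B \<in> borel_measurable borel"
proof -
  have [measurable]: "A \<in> borel_measurable lborel" "B \<in> borel_measurable lborel" by simp_all
  have "(\<lambda>t. LINT s|lborel. (if 0 \<le> s \<and> s \<le> t then 1 else 0) * (A (t - s) * B s)) \<in> borel_measurable lborel"
    by measurable
  moreover have "cv A B = (\<lambda>t. LINT s|lborel. (if 0 \<le> s \<and> s \<le> t then 1 else 0) * (A (t - s) * B s))"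
    unfolding cv_def by (intro ext Bochner_Integration.integral_cong refl) (auto split: split_indicator)
  ultimately show ?thesis by simp
qed

lemma cv_int_bounded:
  fixes X f :: "real \<Rightarrow> real"
  assumes [measurable]: "X \<in> borel_measurable borel" "f \<in> borel_measurable borel"
    and X: "\<And>x. x \<in> {0..\<tau>} \<Longrightarrow> \<bar>X x\<bar> \<le> M" and f: "\<And>x. x \<in> {0..\<tau>} \<Longrightarrow> \<bar>f x\<bar> \<le> C"
  shows "integrable lborel (\<lambda>s. indicator {0..\<tau>} s * (X (\<tau> - s) * f s))"
proof (rule Bochner_Integration.integrable_bound[OF const_int[of 0 \<tau> "M * C"]])
  show "(\<lambda>s. indicator {0..\<tau>} s * (X (\<tau> - s) * f s)) \<in> borel_measurable lborel" by measurable
  show "AE s in lborel. norm (indicator {0..\<tau>} s * (X (\<tau> - s) * f s)) \<le> norm (indicator {0..\<tau>} s * (M * C))"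
  proof (rule AE_I2)
    fix s
    show "norm (indicator {0..\<tau>} s * (X (\<tau> - s) * f s)) \<le> norm (indicator {0..\<tau>} s * (M * C))"
    proof (cases "s \<in> {0..\<tau>}")
      case True
      have "\<bar>X (\<tau> - s)\<bar> * \<bar>f s\<bar> \<le> M * C"
        using X[of "\<tau> - s"] f[of s] True by (intro mult_mono) auto
      moreover have "M \<ge> 0" "C \<ge> 0" using X[of "\<tau> - s"] f[of s] True by auto
      ultimately show ?thesis using True by (simp add: abs_mult)
    qed simp
  qed
qed

lemma cv_diff_ker:
  assumes "integrable lborel (\<lambda>s. indicator {0..\<tau>} s * (A (\<tau> - s) * f s))"
    and "integrable lborel (\<lambda>s. indicator {0..\<tau>} s * (B (\<tau> - s) * f s))"
  shows "cv (\<lambda>x. A x - c * B x) f \<tau> = cv A f \<tau> - c * cv B f \<tau>"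
proof -
  have "cv (\<lambda>x. A x - c * B x) f \<tau> = (LINT s|lborel. indicator {0..\<tau>} s * (A (\<tau> - s) * f s) - c * (indicator {0..\<tau>} s * (B (\<tau> - s) * f s)))"
    unfolding cv_def by (intro Bochner_Integration.integral_cong refl) (simp add: algebra_simps)
  also have "\<dots> = cv A f \<tau> - c * cv B f \<tau>"
    unfolding cv_def using assms by simp
  finally show ?thesis .
qed

lemma uk_L1: "integrable lborel (\<lambda>x. indicator {0..T} x * uk x)"
proof -
  have "(\<lambda>x. indicator {0..T} x * uk x) = (\<lambda>x. indicator {0..T} x * (1::real))"
    by (auto simp: fun_eq_iff uk_def split: split_indicator)
  thus ?thesis using const_int[of 0 T 1] by simp
qed

lemma core_identities:
  fixes a lam T :: real and pe :: "real \<Rightarrow> real"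
  assumes a: "0 < a" "a < 1" and lam: "lam > 0" and T: "T \<ge> 0"
    and cp: "continuous_on UNIV pe" and \<tau>: "\<tau> \<in> {0..T}"
  shows "cv (kz a lam) (cv uk pe) \<tau> = cv uk (cv (kz a lam) pe) \<tau>"
        "cv (gk (1 - a)) (cv (kz a lam) pe) \<tau> = cv uk pe \<tau> - lam * cv uk (cv (kz a lam) pe) \<tau>"
proof -
  define K where "K = kz a lam"
  have Km[measurable]: "K \<in> borel_measurable borel" unfolding K_def by (rule kz_meas[OF a lam])
  have KL: "integrable lborel (\<lambda>x. indicator {0..T} x * K x)" unfolding K_def by (rule kz_L1[OF a lam T])
  have pm[measurable]: "pe \<in> borel_measurable borel" by (rule borel_measurable_continuous_onI[OF cp])
  obtain C where C: "C \<ge> 0" "\<And>x. x \<in> {0..T} \<Longrightarrow> \<bar>pe x\<bar> \<le> C"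
    using cont_bounded_Icc[OF continuous_on_subset[OF cp]] by blast
  have t0: "0 \<le> \<tau>" "\<tau> \<le> T" using \<tau> by auto
  have A1: "cv uk (cv K pe) \<tau> = cv (cv uk K) pe \<tau>"
    by (rule assoc_conv[OF uk_meas Km pm uk_L1 KL C(2) t0])
  have A2: "cv K (cv uk pe) \<tau> = cv (cv K uk) pe \<tau>"
    by (rule assoc_conv[OF Km uk_meas pm KL uk_L1 C(2) t0])
  have KU: "cv K uk = cv uk K" by (rule ext, rule cv_K_uk)
  show "cv (kz a lam) (cv uk pe) \<tau> = cv uk (cv (kz a lam) pe) \<tau>"
    using A1 A2 KU by (simp add: K_def)
  have b1: "1 - a > 0" using a by simp
  have GL: "integrable lborel (\<lambda>x. indicator {0..T} x * gk (1 - a) x)" by (rule gk_int(1)[OF b1 T])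
  have A3: "cv (gk (1 - a)) (cv K pe) \<tau> = cv (cv (gk (1 - a)) K) pe \<tau>"
    by (rule assoc_conv[OF gk_meas Km pm GL KL C(2) t0])
  have A4: "cv (cv (gk (1 - a)) K) pe \<tau> = cv (\<lambda>x. uk x - lam * cv uk K x) pe \<tau>"
  proof (rule cv_cong_ker)
    fix x :: real assume "0 < x" "x \<le> \<tau>"
    thus "cv (gk (1 - a)) K x = uk x - lam * cv uk K x"
      using kernel_identity[OF a lam \<open>0 < x\<close>] by (simp add: K_def uk_def algebra_simps)
  qed
  define nK where "nK = (LINT x|lborel. indicator {0..T} x * \<bar>K x\<bar>)"
  have KLa: "integrable lborel (\<lambda>x. indicator {0..T} x * \<bar>K x\<bar>)"
    using integrable_abs[OF KL] by (simp add: abs_mult)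
  have ukK: "\<bar>cv uk K x\<bar> \<le> nK" if "x \<in> {0..\<tau>}" for x
  proof -
    have "\<bar>cv uk K x\<bar> = \<bar>LINT s|lborel. indicator {0..x} s * K s\<bar>" by (simp add: cv_uk)
    also have "\<dots> \<le> nK" unfolding nK_def
    proof (rule integral_abs_bound_integral[OF _ KLa])
      show "integrable lborel (\<lambda>s. indicator {0..x} s * K s)"
        by (rule L1_sub[OF KL]) (use that t0 in auto)
      fix s show "\<bar>indicator {0..x} s * K s\<bar> \<le> indicator {0..T} s * \<bar>K s\<bar>"
        using that t0 by (auto simp: abs_mult split: split_indicator)
    qed
    finally show ?thesis .
  qed
  have C': "\<And>x. x \<in> {0..\<tau>} \<Longrightarrow> \<bar>pe x\<bar> \<le> C" using C(2) t0 by auto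
  have A5: "cv (\<lambda>x. uk x - lam * cv uk K x) pe \<tau> = cv uk pe \<tau> - lam * cv (cv uk K) pe \<tau>"
  proof (rule cv_diff_ker)
    show "integrable lborel (\<lambda>s. indicator {0..\<tau>} s * (uk (\<tau> - s) * pe s))"
      by (rule cv_int_bounded[where M=1, OF uk_meas pm _ C']) (simp add: uk_def)
    show "integrable lborel (\<lambda>s. indicator {0..\<tau>} s * (cv uk K (\<tau> - s) * pe s))"
      by (rule cv_int_bounded[OF cv_meas[OF uk_meas Km] pm ukK C'])
  qed
  show "cv (gk (1 - a)) (cv (kz a lam) pe) \<tau> = cv uk pe \<tau> - lam * cv uk (cv (kz a lam) pe) \<tau>"
    using A1 A3 A4 A5 by (simp add: K_def)
qed

theorem theorem3p1:
  fixes T \<alpha> c d lam u0 u1 :: real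
    and p q p' :: "real \<Rightarrow> real"
  assumes "T > 0" and "0 < \<alpha>" and "\<alpha> < 1"
    and "c > 0" and "d > 0" and "lam > 0"
    and cont_p: "continuous_on {0..T} p"
    and cont_q: "continuous_on {0..T} q"
    and deriv_p: "\<And>t. t \<in> {0<..T} \<Longrightarrow> (p has_real_derivative p' t) (at t within {0..T})"
    and deriv_q: "\<And>t. t \<in> {0<..T} \<Longrightarrow> (q has_real_derivative p t) (at t within {0..T})"
    and eqn: "\<And>t. t \<in> {0<..T} \<Longrightarrow>
       ((\<lambda>s. ml_kernel \<alpha> lam (t - s) * q s) has_integral (p' t + c * q t) / d) {0..t}"
    and init_q: "q 0 = u0" and init_p: "p 0 = u1"
    and "u0 = 0" and "c - d / lam \<ge> 0"
  shows "\<forall>t \<in> {0..T}. (p t)\<^sup>2 + (c - d / lam) * (q t)\<^sup>2 \<le> u1\<^sup>2"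
proof
  fix t0 assume t0: "t0 \<in> {0..T}"
  have Tp: "T > 0" and a: "0 < \<alpha>" "\<alpha> < 1" and dp: "d > 0" and lam: "lam > 0"
    using assms by auto
  have q0: "q 0 = 0" using init_q assms by simp
  show "(p t0)\<^sup>2 + (c - d / lam) * (q t0)\<^sup>2 \<le> u1\<^sup>2"
  proof (cases "t0 = 0")
    case True
    thus ?thesis using q0 init_p by simp
  next
    case False
    hence t0p: "0 < t0" "t0 \<le> T" using t0 by auto
    define clamp where "clamp x = max 0 (min T x)" for x :: real
    have clamp_in: "clamp x \<in> {0..T}" for x using Tp by (auto simp: clamp_def)
    have clamp_id: "x \<in> {0..T} \<Longrightarrow> clamp x = x" for x by (auto simp: clamp_def)
    have cclamp: "continuous_on UNIV clamp" unfolding clamp_def by (intro continuous_intros)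
    have ext_cont: "continuous_on UNIV (\<lambda>x. f (clamp x))" if "continuous_on {0..T} f" for f :: "real \<Rightarrow> real"
      by (rule continuous_on_compose2[OF that cclamp]) (use clamp_in in auto)
    define pe where "pe x = p (clamp x)" for x
    define qe where "qe x = q (clamp x)" for x
    have cpe: "continuous_on UNIV pe" unfolding pe_def by (rule ext_cont[OF cont_p])
    have pe_eq: "x \<in> {0..T} \<Longrightarrow> pe x = p x" for x by (simp add: pe_def clamp_id)
    have qe_eq: "x \<in> {0..T} \<Longrightarrow> qe x = q x" for x by (simp add: qe_def clamp_id)
    define K where "K = kz \<alpha> lam"
    have Km[measurable]: "K \<in> borel_measurable borel" unfolding K_def by (rule kz_meas[OF a lam])
    have KL: "integrable lborel (\<lambda>x. indicator {0..T} x * K x)"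
      unfolding K_def by (rule kz_L1[OF a lam]) (use Tp in simp)
    define v where "v = cv K pe"
    have cv_v: "continuous_on {0..T} v"
      unfolding v_def by (rule cont_conv[OF Km KL cpe])
    define ve where "ve x = v (clamp x)" for x
    have cve: "continuous_on UNIV ve" unfolding ve_def by (rule ext_cont[OF cv_v])
    have ve_eq: "x \<in> {0..T} \<Longrightarrow> ve x = v x" for x by (simp add: ve_def clamp_id)
    define W where "W \<tau> = integral {0..\<tau>} ve" for \<tau>
    have int_at: "at x within {0..T} = at x" if "x \<in> {0<..<T}" for x
      by (rule at_within_interior) (use that in simp)
    have dq: "(q has_real_derivative p x) (at x)" if "x \<in> {0<..<T}" for x
      using deriv_q[of x] that int_at[OF that] by auto
    have dpp: "(p has_real_derivative p' x) (at x)" if "x \<in> {0<..<T}" for x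
      using deriv_p[of x] that int_at[OF that] by auto
    have dW: "(W has_real_derivative ve x) (at x within {0..T})" if "x \<in> {0..T}" for x
      unfolding W_def has_real_derivative_iff_has_vector_derivative
      by (rule integral_has_vector_derivative[OF continuous_on_subset[OF cve] that]) simp
    have dWi: "(W has_real_derivative ve x) (at x)" if "x \<in> {0<..<T}" for x
      using dW[of x] that int_at[OF that] by auto
    have cW: "continuous_on {0..T} W"
      unfolding continuous_on_eq_continuous_within
    proof
      fix x assume "x \<in> {0..T}"
      from dW[OF this] show "continuous (at x within {0..T}) W"
        unfolding has_real_derivative_iff_has_vector_derivative by (rule has_vector_derivative_continuous)
    qed
    have q_cv: "q \<tau> = cv uk pe \<tau>" if "\<tau> \<in> {0..T}" for \<tau>
    proof -
      have "(pe has_integral (q \<tau> - q 0)) {0..\<tau>}"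
      proof (rule fundamental_theorem_of_calculus_interior)
        show "0 \<le> \<tau>" using that by simp
        show "continuous_on {0..\<tau>} q" by (rule continuous_on_subset[OF cont_q]) (use that in auto)
        fix x assume x: "x \<in> {0<..<\<tau>}"
        hence "x \<in> {0<..<T}" using that by auto
        from dq[OF this] show "(q has_vector_derivative pe x) (at x)"
          using pe_eq[of x] x that by (simp add: has_real_derivative_iff_has_vector_derivative)
      qed
      hence "integral {0..\<tau>} pe = q \<tau>" using q0 by (simp add: integral_unique)
      moreover have "cv uk pe \<tau> = integral {0..\<tau>} pe"
        by (rule cv_uk_hk) (rule continuous_on_subset[OF cpe], simp)
      ultimately show ?thesis by simp
    qed
    have W_cv: "W \<tau> = cv uk v \<tau>" if "\<tau> \<in> {0..T}" for \<tau>
    proof -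
      have "cv uk v \<tau> = cv uk ve \<tau>" by (rule cv_cong_fun) (use ve_eq that in auto)
      also have "\<dots> = W \<tau>" unfolding W_def
        by (rule cv_uk_hk) (rule continuous_on_subset[OF cve], simp)
      finally show ?thesis by simp
    qed
    have memW: "p' \<tau> + c * q \<tau> = d * W \<tau>" if "\<tau> \<in> {0<..T}" for \<tau>
    proof -
      have \<tau>: "\<tau> \<in> {0..T}" "0 < \<tau>" using that by auto
      obtain C where C: "C \<ge> 0" "\<And>x. x \<in> {0..T} \<Longrightarrow> \<bar>q x\<bar> \<le> C"
        using cont_bounded_Icc[OF cont_q] by blast
      have qem[measurable]: "qe \<in> borel_measurable borel"
        by (rule borel_measurable_continuous_onI) (unfold qe_def, rule ext_cont[OF cont_q])
      have iKr: "integrable lborel (\<lambda>s. indicator {0..\<tau>} s * \<bar>K (\<tau> - s)\<bar>)"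
      proof (rule L1_reflect, rule L1_sub)
        show "integrable lborel (\<lambda>x. indicator {0..T} x * \<bar>K x\<bar>)"
          using integrable_abs[OF KL] by (simp add: abs_mult)
      qed (use \<tau> in auto)
      have si: "set_integrable lborel {0..\<tau>} (\<lambda>s. K (\<tau> - s) * qe s)"
        unfolding set_integrable_def
      proof (rule Bochner_Integration.integrable_bound[OF integrable_mult_right[OF iKr, of C]])
        show "(\<lambda>x. indicator {0..\<tau>} x *\<^sub>R (K (\<tau> - x) * qe x)) \<in> borel_measurable lborel" by measurable
        show "AE x in lborel. norm (indicator {0..\<tau>} x *\<^sub>R (K (\<tau> - x) * qe x)) \<le> norm (C * (indicator {0..\<tau>} x * \<bar>K (\<tau> - x)\<bar>))"
        proof (rule AE_I2)
          fix x
          show "norm (indicator {0..\<tau>} x *\<^sub>R (K (\<tau> - x) * qe x)) \<le> norm (C * (indicator {0..\<tau>} x * \<bar>K (\<tau> - x)\<bar>))"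
          proof (cases "x \<in> {0..\<tau>}")
            case True
            have "\<bar>qe x\<bar> \<le> C" using C(2)[of x] qe_eq[of x] True \<tau> by auto
            hence "\<bar>K (\<tau> - x)\<bar> * \<bar>qe x\<bar> \<le> \<bar>K (\<tau> - x)\<bar> * C" by (intro mult_left_mono) auto
            thus ?thesis using True C by (simp add: abs_mult mult_ac)
          qed simp
        qed
      qed
      have "cv K qe \<tau> = integral {0..\<tau>} (\<lambda>s. K (\<tau> - s) * qe s)"
        using set_borel_integral_eq_integral(2)[OF si] by (simp add: cv_def set_lebesgue_integral_def)
      also have "\<dots> = integral {0..\<tau>} (\<lambda>s. ml_kernel \<alpha> lam (\<tau> - s) * q s)"
      proof (rule integral_cong)
        fix s assume s: "s \<in> {0..\<tau>}"
        hence "qe s = q s" using qe_eq \<tau> by auto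
        moreover have "K (\<tau> - s) = ml_kernel \<alpha> lam (\<tau> - s)"
          using s by (cases "s = \<tau>") (auto simp: K_def kz_def ml_kernel_def)
        ultimately show "K (\<tau> - s) * qe s = ml_kernel \<alpha> lam (\<tau> - s) * q s" by simp
      qed
      also have "\<dots> = (p' \<tau> + c * q \<tau>) / d" by (rule integral_unique[OF eqn[OF that]])
      finally have e1: "cv K qe \<tau> = (p' \<tau> + c * q \<tau>) / d" .
      have "cv K qe \<tau> = cv K (cv uk pe) \<tau>"
        by (rule cv_cong_fun) (use q_cv qe_eq \<tau> in auto)
      also have "\<dots> = cv uk v \<tau>"
        unfolding K_def v_def by (rule core_identities(1)[OF a lam _ cpe \<tau>(1)]) (use Tp in simp)
      also have "\<dots> = W \<tau>" using W_cv[OF \<tau>(1)] by simp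
      finally show ?thesis using e1 dp by (simp add: field_simps)
    qed
    define Y where "Y \<tau> = q \<tau> - lam * W \<tau>" for \<tau>
    have Y_cv: "cv (gk (1 - \<alpha>)) ve \<tau> = Y \<tau>" if "\<tau> \<in> {0..T}" for \<tau>
    proof -
      have "cv (gk (1 - \<alpha>)) ve \<tau> = cv (gk (1 - \<alpha>)) v \<tau>" by (rule cv_cong_fun) (use ve_eq that in auto)
      also have "\<dots> = cv uk pe \<tau> - lam * cv uk v \<tau>"
        unfolding v_def K_def by (rule core_identities(2)[OF a lam _ cpe that]) (use Tp in simp)
      also have "\<dots> = Y \<tau>" using q_cv[OF that] W_cv[OF that] by (simp add: Y_def)
      finally show ?thesis .
    qed
    have sub: "{0..t0} \<subseteq> {0..T}" using t0p by auto
    have int_sub: "x \<in> {0<..<t0} \<Longrightarrow> x \<in> {0<..<T}" for x using t0p by auto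
    have cp0: "continuous_on {0..t0} p" by (rule continuous_on_subset[OF cont_p sub])
    have cq0: "continuous_on {0..t0} q" by (rule continuous_on_subset[OF cont_q sub])
    have cW0: "continuous_on {0..t0} W" by (rule continuous_on_subset[OF cW sub])
    have cve0: "continuous_on {0..t0} ve" by (rule continuous_on_subset[OF cve]) simp
    have cY0: "continuous_on {0..t0} Y" unfolding Y_def by (intro continuous_intros cq0 cW0)
    have IE: "((\<lambda>x. 2 * d * (p x * W x)) has_integral
        (((p t0)\<^sup>2 + c * (q t0)\<^sup>2) - ((p 0)\<^sup>2 + c * (q 0)\<^sup>2))) {0..t0}"
    proof (rule fundamental_theorem_of_calculus_interior)
      show "0 \<le> t0" using t0p by simp
      show "continuous_on {0..t0} (\<lambda>x. (p x)\<^sup>2 + c * (q x)\<^sup>2)" by (intro continuous_intros cp0 cq0)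
      fix x assume x: "x \<in> {0<..<t0}"
      have xT: "x \<in> {0<..<T}" by (rule int_sub[OF x])
      have "((\<lambda>x. (p x)\<^sup>2 + c * (q x)\<^sup>2) has_real_derivative (2 * p x * p' x + c * (2 * q x * p x))) (at x)"
        using dpp[OF xT] dq[OF xT] by (auto intro!: derivative_eq_intros)
      moreover have "2 * p x * p' x + c * (2 * q x * p x) = 2 * d * (p x * W x)"
      proof -
        have e: "p' x + c * q x = d * W x" by (rule memW) (use xT in auto)
        have "2 * p x * p' x + c * (2 * q x * p x) = 2 * p x * (p' x + c * q x)" by (simp add: algebra_simps)
        also have "\<dots> = 2 * p x * (d * W x)" by (simp only: e)
        also have "\<dots> = 2 * d * (p x * W x)" by (simp add: algebra_simps)
        finally show ?thesis .
      qed
      ultimately show "((\<lambda>x. (p x)\<^sup>2 + c * (q x)\<^sup>2) has_vector_derivative 2 * d * (p x * W x)) (at x)"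
        by (simp add: has_real_derivative_iff_has_vector_derivative)
    qed
    have IPQ: "((\<lambda>x. p x * q x) has_integral ((q t0)\<^sup>2 / 2 - (q 0)\<^sup>2 / 2)) {0..t0}"
    proof (rule fundamental_theorem_of_calculus_interior)
      show "0 \<le> t0" using t0p by simp
      show "continuous_on {0..t0} (\<lambda>x. (q x)\<^sup>2 / 2)" by (intro continuous_intros cq0) auto
      fix x assume x: "x \<in> {0<..<t0}"
      have xT: "x \<in> {0<..<T}" by (rule int_sub[OF x])
      have "((\<lambda>x. (q x)\<^sup>2 / 2) has_real_derivative (p x * q x)) (at x)"
        using dq[OF xT] by (auto intro!: derivative_eq_intros)
      thus "((\<lambda>x. (q x)\<^sup>2 / 2) has_vector_derivative p x * q x) (at x)"
        by (simp add: has_real_derivative_iff_has_vector_derivative)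
    qed
    have IPY: "((\<lambda>x. Y x * (p x - lam * ve x)) has_integral ((Y t0)\<^sup>2 / 2 - (Y 0)\<^sup>2 / 2)) {0..t0}"
    proof (rule fundamental_theorem_of_calculus_interior)
      show "0 \<le> t0" using t0p by simp
      show "continuous_on {0..t0} (\<lambda>x. (Y x)\<^sup>2 / 2)" by (intro continuous_intros cY0) auto
      fix x assume x: "x \<in> {0<..<t0}"
      have xT: "x \<in> {0<..<T}" by (rule int_sub[OF x])
      have dY: "(Y has_real_derivative (p x - lam * ve x)) (at x)"
        unfolding Y_def[abs_def] using dq[OF xT] dWi[OF xT] by (auto intro!: derivative_eq_intros)
      have "((\<lambda>x. (Y x)\<^sup>2 / 2) has_real_derivative (Y x * (p x - lam * ve x))) (at x)"
        using dY by (auto intro!: derivative_eq_intros)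
      thus "((\<lambda>x. (Y x)\<^sup>2 / 2) has_vector_derivative Y x * (p x - lam * ve x)) (at x)"
        by (simp add: has_real_derivative_iff_has_vector_derivative)
    qed
    have cvY: "continuous_on {0..t0} (\<lambda>x. ve x * Y x)" by (intro continuous_intros cve0 cY0)
    have IVY: "((\<lambda>x. ve x * Y x) has_integral integral {0..t0} (\<lambda>x. ve x * Y x)) {0..t0}"
      by (rule integrable_integral[OF integrable_continuous_real[OF cvY]])
    have VY0: "integral {0..t0} (\<lambda>x. ve x * Y x) \<ge> 0"
    proof -
      have b1: "0 < 1 - \<alpha>" "1 - \<alpha> < 1" using a by auto
      have pk: "0 \<le> (LINT \<tau>|lborel. indicator {0..t0} \<tau> * (ve \<tau> * cv (gk (1 - \<alpha>)) ve \<tau>))"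
        by (rule pos_kernel[OF b1 cve]) (use t0p in simp)
      have "(LINT \<tau>|lborel. indicator {0..t0} \<tau> * (ve \<tau> * cv (gk (1 - \<alpha>)) ve \<tau>))
          = (LINT \<tau>|lborel. indicator {0..t0} \<tau> * (ve \<tau> * Y \<tau>))"
        by (intro Bochner_Integration.integral_cong refl) (use Y_cv sub in \<open>auto split: split_indicator\<close>)
      also have "\<dots> = integral {0..t0} (\<lambda>x. ve x * Y x)"
      proof -
        have si: "set_integrable lborel {0..t0} (\<lambda>x. ve x * Y x)"
          unfolding set_integrable_def by (rule borel_integrable_compact[OF _ cvY]) simp
        show ?thesis using set_borel_integral_eq_integral(2)[OF si] by (simp add: set_lebesgue_integral_def)
      qed
      finally show ?thesis using pk by simp
    qed
    have Y0: "Y 0 = 0" using q0 by (simp add: Y_def W_def)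
    have comb: "((\<lambda>x. (2 * d / lam) * (p x * q x) - (2 * d / lam) * (Y x * (p x - lam * ve x)) - (2 * d) * (ve x * Y x))
        has_integral ((2 * d / lam) * ((q t0)\<^sup>2 / 2 - (q 0)\<^sup>2 / 2) - (2 * d / lam) * ((Y t0)\<^sup>2 / 2 - (Y 0)\<^sup>2 / 2)
                      - (2 * d) * integral {0..t0} (\<lambda>x. ve x * Y x))) {0..t0}"
      by (intro has_integral_diff has_integral_mult_right IPQ IPY IVY)
    have "(\<lambda>x. (2 * d / lam) * (p x * q x) - (2 * d / lam) * (Y x * (p x - lam * ve x)) - (2 * d) * (ve x * Y x))
        = (\<lambda>x. 2 * d * (p x * W x))"
    proof (rule ext)
      fix x
      have "(2 * d / lam) * (p x * q x) - (2 * d / lam) * (Y x * (p x - lam * ve x)) - (2 * d) * (ve x * Y x)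
          = (2 * d / lam) * (p x * (q x - Y x))"
        using lam by (simp add: algebra_simps less_imp_neq[symmetric])
      also have "q x - Y x = lam * W x" by (simp add: Y_def)
      finally show "(2 * d / lam) * (p x * q x) - (2 * d / lam) * (Y x * (p x - lam * ve x)) - (2 * d) * (ve x * Y x)
          = 2 * d * (p x * W x)" using lam by simp
    qed
    with comb have IE2: "((\<lambda>x. 2 * d * (p x * W x)) has_integral
        ((2 * d / lam) * ((q t0)\<^sup>2 / 2 - (q 0)\<^sup>2 / 2) - (2 * d / lam) * ((Y t0)\<^sup>2 / 2 - (Y 0)\<^sup>2 / 2)
                      - (2 * d) * integral {0..t0} (\<lambda>x. ve x * Y x))) {0..t0}" by simp
    have eqE: "((p t0)\<^sup>2 + c * (q t0)\<^sup>2) - ((p 0)\<^sup>2 + c * (q 0)\<^sup>2)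
        = (2 * d / lam) * ((q t0)\<^sup>2 / 2 - (q 0)\<^sup>2 / 2) - (2 * d / lam) * ((Y t0)\<^sup>2 / 2 - (Y 0)\<^sup>2 / 2)
                      - (2 * d) * integral {0..t0} (\<lambda>x. ve x * Y x)"
      using has_integral_unique[OF IE IE2] .
    have "(2 * d / lam) * ((Y t0)\<^sup>2 / 2) \<ge> 0" using dp lam by simp
    moreover have "(2 * d) * integral {0..t0} (\<lambda>x. ve x * Y x) \<ge> 0" using dp VY0 by simp
    ultimately have "(p t0)\<^sup>2 + c * (q t0)\<^sup>2 - u1\<^sup>2 \<le> (2 * d / lam) * ((q t0)\<^sup>2 / 2)"
      using eqE q0 Y0 init_p by simp
    moreover have "(2 * d / lam) * ((q t0)\<^sup>2 / 2) = d / lam * (q t0)\<^sup>2" by simp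
    ultimately show ?thesis by (simp add: algebra_simps)
  qed
qed

end
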